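(* Let $G$ be a regular CERS and let $S$ be a maximal resonant set of $G$. If $F$ is an inner face of $G$ that does not belong to $S$, then some inner face adjacent to $F$ belongs to $S$.
   Context: A CERS (catacondensed even ring system) is a simple bipartite 2-connected plane graph with all interior vertices of degree 3 and all boundary vertices of degree 2 or 3, whose inner dual (graph on inner faces, adjacent iff sharing an edge) is a tree. For inner faces $F,F',F''$ with $F,F'$ sharing edge $e$ and $F',F''$ sharing edge $f$ ($F\ne F''$), the adjacent triple $(F,F',F'')$ is regular if $d_G(e,f)$ (distance in the line graph of $G$) is even. A CERS is regular if it has at most two inner faces or all adjacent triples of faces are regular. An inner face $F$ is $M$-alternating for a perfect matching $M$ if the edges of $F$ alternate in and out of $M$. A set $S$ of pairwise disjoint inner faces is a resonant set if there is a perfect matching $M$ such that every face in $S$ is $M$-alternating; it is maximal if it is maximal under inclusion among resonant sets. *)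

theory Defs
  imports Main
begin

text \<open>A plane embedding of a 2-connected graph is given combinatorially by its faces:
  a finite set Fs of face labels, a boundary map bd (each face boundary is a cycle
  of G, given as a set of edges) and a distinguished outer face out.\<close>

definition simple_graph :: "'a set \<Rightarrow> 'a set set \<Rightarrow> bool" where
  "simple_graph V E \<longleftrightarrow> finite V \<and> (\<forall>e\<in>E. e \<subseteq> V \<and> card e = 2)"

definition degree :: "'a set set \<Rightarrow> 'a \<Rightarrow> nat" where
  "degree E v = card {e\<in>E. v \<in> e}"

definition walk_rel :: "'a set \<Rightarrow> 'a set set \<Rightarrow> 'a \<Rightarrow> 'a \<Rightarrow> bool" where
  "walk_rel W E u v \<longleftrightarrow> u \<in> W \<and> v \<in> W \<and> {u, v} \<in> E"

definition connected_on :: "'a set \<Rightarrow> 'a set set \<Rightarrow> bool" where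
  "connected_on W E \<longleftrightarrow> W \<noteq> {} \<and> (\<forall>u\<in>W. \<forall>v\<in>W. (walk_rel W E)\<^sup>*\<^sup>* u v)"

definition two_connected :: "'a set \<Rightarrow> 'a set set \<Rightarrow> bool" where
  "two_connected V E \<longleftrightarrow> card V \<ge> 3 \<and> connected_on V E \<and>
     (\<forall>x\<in>V. connected_on (V - {x}) E)"

definition bipartite :: "'a set \<Rightarrow> 'a set set \<Rightarrow> bool" where
  "bipartite V E \<longleftrightarrow> (\<exists>c :: 'a \<Rightarrow> bool. \<forall>e\<in>E. \<forall>u\<in>e. \<forall>v\<in>e. u \<noteq> v \<longrightarrow> c u \<noteq> c v)"

definition is_cycle :: "'a set set \<Rightarrow> 'a set set \<Rightarrow> bool" where
  "is_cycle E C \<longleftrightarrow> C \<subseteq> E \<and> C \<noteq> {} \<and> finite C \<and> (\<forall>v\<in>\<Union>C. degree C v = 2) \<and>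
     (\<forall>D. D \<subseteq> C \<and> D \<noteq> {} \<and> D \<noteq> C \<longrightarrow> (\<exists>e\<in>D. \<exists>f\<in>C - D. e \<inter> f \<noteq> {}))"

text \<open>Combinatorial description of a 2-connected plane graph via its facial cycles:
  every face boundary is a cycle, every edge lies on exactly two faces, around every
  vertex the faces form a single cyclic sequence (connected vertex link), and Euler's
  formula holds (so the surface obtained by gluing discs to the faces is the sphere).\<close>
definition link_rel :: "'a set set \<Rightarrow> 'f set \<Rightarrow> ('f \<Rightarrow> 'a set set) \<Rightarrow> 'a \<Rightarrow> 'a set \<Rightarrow> 'a set \<Rightarrow> bool" where
  "link_rel E Fs bd v e f \<longleftrightarrow> e \<in> E \<and> f \<in> E \<and> v \<in> e \<and> v \<in> f \<and>
     (\<exists>F\<in>Fs. e \<in> bd F \<and> f \<in> bd F)"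

definition plane_faces :: "'a set \<Rightarrow> 'a set set \<Rightarrow> 'f set \<Rightarrow> ('f \<Rightarrow> 'a set set) \<Rightarrow> 'f \<Rightarrow> bool" where
  "plane_faces V E Fs bd out \<longleftrightarrow> finite Fs \<and> out \<in> Fs \<and>
     (\<forall>F\<in>Fs. is_cycle E (bd F)) \<and>
     (\<forall>e\<in>E. card {F\<in>Fs. e \<in> bd F} = 2) \<and>
     (\<forall>v\<in>V. \<forall>e\<in>E. \<forall>f\<in>E. v \<in> e \<and> v \<in> f \<longrightarrow> (link_rel E Fs bd v)\<^sup>*\<^sup>* e f) \<and>
     int (card V) - int (card E) + int (card Fs) = 2"

definition inner_faces :: "'f set \<Rightarrow> 'f \<Rightarrow> 'f set" where
  "inner_faces Fs out = Fs - {out}"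

definition face_adj :: "('f \<Rightarrow> 'a set set) \<Rightarrow> 'f \<Rightarrow> 'f \<Rightarrow> bool" where
  "face_adj bd F F' \<longleftrightarrow> F \<noteq> F' \<and> bd F \<inter> bd F' \<noteq> {}"

definition is_tree :: "'b set \<Rightarrow> ('b \<Rightarrow> 'b \<Rightarrow> bool) \<Rightarrow> bool" where
  "is_tree W R \<longleftrightarrow> finite W \<and> W \<noteq> {} \<and>
     (\<forall>u\<in>W. \<forall>v\<in>W. (\<lambda>a b. a \<in> W \<and> b \<in> W \<and> R a b)\<^sup>*\<^sup>* u v) \<and>
     card {{a, b} | a b. a \<in> W \<and> b \<in> W \<and> R a b} + 1 = card W"

definition cers :: "'a set \<Rightarrow> 'a set set \<Rightarrow> 'f set \<Rightarrow> ('f \<Rightarrow> 'a set set) \<Rightarrow> 'f \<Rightarrow> bool" where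
  "cers V E Fs bd out \<longleftrightarrow> simple_graph V E \<and> bipartite V E \<and> two_connected V E \<and>
     plane_faces V E Fs bd out \<and>
     (\<forall>v\<in>V - \<Union>(bd out). degree E v = 3) \<and>
     (\<forall>v\<in>V \<inter> \<Union>(bd out). degree E v = 2 \<or> degree E v = 3) \<and>
     is_tree (inner_faces Fs out) (face_adj bd)"

definition line_adj :: "'a set set \<Rightarrow> 'a set \<Rightarrow> 'a set \<Rightarrow> bool" where
  "line_adj E e f \<longleftrightarrow> e \<in> E \<and> f \<in> E \<and> e \<noteq> f \<and> e \<inter> f \<noteq> {}"

definition line_dist :: "'a set set \<Rightarrow> 'a set \<Rightarrow> 'a set \<Rightarrow> nat" where
  "line_dist E e f = (LEAST n. (line_adj E ^^ n) e f)"

definition regular_cers :: "'a set \<Rightarrow> 'a set set \<Rightarrow> 'f set \<Rightarrow> ('f \<Rightarrow> 'a set set) \<Rightarrow> 'f \<Rightarrow> bool" where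
  "regular_cers V E Fs bd out \<longleftrightarrow> cers V E Fs bd out \<and>
     (card (inner_faces Fs out) \<le> 2 \<or>
      (\<forall>F\<in>inner_faces Fs out. \<forall>F'\<in>inner_faces Fs out. \<forall>F''\<in>inner_faces Fs out. \<forall>e f.
         F \<noteq> F' \<and> F' \<noteq> F'' \<and> F \<noteq> F'' \<and> e \<in> bd F \<and> e \<in> bd F' \<and> f \<in> bd F' \<and> f \<in> bd F''
         \<longrightarrow> even (line_dist E e f)))"

definition perfect_matching :: "'a set \<Rightarrow> 'a set set \<Rightarrow> 'a set set \<Rightarrow> bool" where
  "perfect_matching V E M \<longleftrightarrow> M \<subseteq> E \<and> (\<forall>v\<in>V. degree M v = 1)"

text \<open>The edges of the facial cycle of F alternate in and out of M: every vertex of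
  the cycle is incident with exactly one of its two cycle edges lying in M.\<close>
definition M_alternating :: "('f \<Rightarrow> 'a set set) \<Rightarrow> 'a set set \<Rightarrow> 'f \<Rightarrow> bool" where
  "M_alternating bd M F \<longleftrightarrow> (\<forall>v\<in>\<Union>(bd F). card {e \<in> bd F \<inter> M. v \<in> e} = 1)"

definition resonant_set :: "'a set \<Rightarrow> 'a set set \<Rightarrow> 'f set \<Rightarrow> ('f \<Rightarrow> 'a set set) \<Rightarrow> 'f \<Rightarrow> 'f set \<Rightarrow> bool" where
  "resonant_set V E Fs bd out S \<longleftrightarrow> S \<subseteq> inner_faces Fs out \<and>
     (\<forall>F\<in>S. \<forall>F'\<in>S. F \<noteq> F' \<longrightarrow> \<Union>(bd F) \<inter> \<Union>(bd F') = {}) \<and>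
     (\<exists>M. perfect_matching V E M \<and> (\<forall>F\<in>S. M_alternating bd M F))"

definition maximal_resonant_set :: "'a set \<Rightarrow> 'a set set \<Rightarrow> 'f set \<Rightarrow> ('f \<Rightarrow> 'a set set) \<Rightarrow> 'f \<Rightarrow> 'f set \<Rightarrow> bool" where
  "maximal_resonant_set V E Fs bd out S \<longleftrightarrow> resonant_set V E Fs bd out S \<and>
     (\<forall>S'. resonant_set V E Fs bd out S' \<and> S \<subseteq> S' \<longrightarrow> S' = S)"

end

theory Submission
  imports Defs
begin

lemma card2_eq:
  assumes "card X = 2" "x \<in> X" "y \<in> X" "x \<noteq> y"
  shows "X = {x, y}"
proof -
  have "finite X" using assms(1) by (metis card.infinite zero_neq_numeral)
  moreover have "{x,y} \<subseteq> X" using assms by auto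
  moreover have "card {x,y} = card X" using assms by auto
  ultimately show ?thesis using card_subset_eq by metis
qed

lemma rtranclp_sym_rel:
  assumes "\<And>x y. P x y \<Longrightarrow> P y x" "P\<^sup>*\<^sup>* x y"
  shows "P\<^sup>*\<^sup>* y x"
  using assms(2)
proof (induction rule: rtranclp_induct)
  case base then show ?case by simp
next
  case (step y z)
  then show ?case using assms(1) by (meson converse_rtranclp_into_rtranclp)
qed

lemma connected_card:
  assumes fin: "finite W" and r: "r \<in> W" and conn: "\<forall>u\<in>W. Q\<^sup>*\<^sup>* r u"
    and inW: "\<And>x y. Q x y \<Longrightarrow> x \<in> W \<and> y \<in> W"
  shows "card W \<le> card {{x,y}|x y. Q x y} + 1"
proof -
  define d where "d w = (LEAST n. (Q^^n) r w)" for w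
  have ex: "\<exists>n. (Q^^n) r w" if "w \<in> W" for w using conn that rtranclp_power by metis
  have dI: "(Q^^d w) r w" if "w \<in> W" for w unfolding d_def using ex[OF that] by (rule LeastI_ex)
  have dle: "d w \<le> n" if "(Q^^n) r w" for w n unfolding d_def using that by (rule Least_le)
  have pred: "\<exists>p. Q p w \<and> d p < d w" if "w \<in> W - {r}" for w
  proof (cases "d w")
    case 0
    then show ?thesis using dI[of w] that by auto
  next
    case (Suc k)
    then have "(Q^^Suc k) r w" using dI[of w] that by auto
    then obtain p where "(Q^^k) r p" "Q p w" by (rule relpowp_Suc_E)
    then show ?thesis using dle[of k p] Suc by auto
  qed
  define p where "p w = (SOME p. Q p w \<and> d p < d w)" for w
  have pp: "Q (p w) w \<and> d (p w) < d w" if "w \<in> W - {r}" for w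
    unfolding p_def using someI_ex[OF pred[OF that]] .
  define f where "f w = {p w, w}" for w
  have inj: "inj_on f (W - {r})"
  proof
    fix w w' assume a: "w \<in> W - {r}" "w' \<in> W - {r}" "f w = f w'"
    show "w = w'"
    proof (rule ccontr)
      assume "w \<noteq> w'"
      then have "w = p w'" "w' = p w" using a(3) unfolding f_def by (auto simp: doubleton_eq_iff)
      then show False using pp[OF a(1)] pp[OF a(2)] by auto
    qed
  qed
  have sub: "f ` (W - {r}) \<subseteq> {{x,y}|x y. Q x y}" using pp unfolding f_def by blast
  have "finite {{x,y}|x y. Q x y}"
  proof (rule finite_subset[of _ "Pow W"])
    show "{{x,y}|x y. Q x y} \<subseteq> Pow W" using inW by blast
  qed (use fin in auto)
  then have "card (f ` (W - {r})) \<le> card {{x,y}|x y. Q x y}" using sub card_mono by blast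
  then have "card (W - {r}) \<le> card {{x,y}|x y. Q x y}" using card_image[OF inj] by simp
  then show ?thesis using r fin by (simp add: card_Diff_singleton)
qed

lemma tree_no_cycle:
  assumes tree: "is_tree W R" and sym: "\<And>x y. R x y \<Longrightarrow> R y x" and irr: "\<And>x. \<not> R x x"
    and abc: "a \<in> W" "b \<in> W" "c \<in> W" "R a b" "R a c" "b \<noteq> c"
    and path: "(\<lambda>x y. x \<in> W - {a} \<and> y \<in> W - {a} \<and> R x y)\<^sup>*\<^sup>* b c"
  shows False
proof -
  define RW where "RW = (\<lambda>x y. x \<in> W \<and> y \<in> W \<and> R x y)"
  define Q where "Q = (\<lambda>x y. x \<in> W \<and> y \<in> W \<and> R x y \<and> {x,y} \<noteq> {a,b})"
  have fin: "finite W" and conn: "\<forall>u\<in>W. \<forall>v\<in>W. RW\<^sup>*\<^sup>* u v"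
    and cnt: "card {{x, y} | x y. x \<in> W \<and> y \<in> W \<and> R x y} + 1 = card W"
    using tree unfolding is_tree_def RW_def by auto
  have Qsym: "Q x y \<Longrightarrow> Q y x" for x y unfolding Q_def using sym by (auto simp: insert_commute)
  have ab: "a \<noteq> b" "a \<noteq> c" using irr abc by auto
  have p1: "Q\<^sup>*\<^sup>* b c" using path
  proof (induction rule: rtranclp_induct)
    case base then show ?case by simp
  next
    case (step y z)
    then have "Q y z" unfolding Q_def by (auto simp: doubleton_eq_iff)
    then show ?case using step by auto
  qed
  have "Q c a" unfolding Q_def using abc ab sym by (auto simp: doubleton_eq_iff)
  then have ba: "Q\<^sup>*\<^sup>* b a" using p1 by auto
  have ab2: "Q\<^sup>*\<^sup>* a b" by (rule rtranclp_sym_rel[of Q, OF Qsym ba])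
  have stepQ: "Q\<^sup>*\<^sup>* x y" if "RW x y" for x y
  proof (cases "{x,y} = {a,b}")
    case True
    then have "(x = a \<and> y = b) \<or> (x = b \<and> y = a)" by (auto simp: doubleton_eq_iff)
    then show ?thesis using ba ab2 by auto
  next
    case False
    then show ?thesis using that unfolding RW_def Q_def by auto
  qed
  have QQ: "Q\<^sup>*\<^sup>* x y" if "RW\<^sup>*\<^sup>* x y" for x y using that
  proof (induction rule: rtranclp_induct)
    case base then show ?case by simp
  next
    case (step y z) then show ?case using stepQ by (meson rtranclp_trans)
  qed
  have c1: "card W \<le> card {{x,y}|x y. Q x y} + 1"
  proof (rule connected_card[OF fin abc(1)])
    show "\<forall>u\<in>W. Q\<^sup>*\<^sup>* a u" using QQ conn abc(1) by blast
    show "Q x y \<Longrightarrow> x \<in> W \<and> y \<in> W" for x y unfolding Q_def by blast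
  qed
  define P where "P = {{x, y} | x y. x \<in> W \<and> y \<in> W \<and> R x y}"
  have c2: "{{x,y}|x y. Q x y} = P - {{a,b}}"
    unfolding Q_def P_def by blast
  have c3: "{a,b} \<in> P" using abc unfolding P_def by blast
  have c4: "finite P" unfolding P_def
    by (rule finite_subset[of _ "Pow W"]) (use fin in auto)
  have "card (P - {{a,b}}) = card P - 1" using c3 c4 by simp
  moreover have "card P \<ge> 1" using c3 c4 by (metis One_nat_def Suc_leI card_gt_0_iff empty_iff)
  moreover have "card W \<le> card (P - {{a,b}}) + 1" using c1 c2 by simp
  ultimately show False using cnt unfolding P_def[symmetric] by linarith
qed

lemma card2_other:
  assumes "card X = 2" "x \<in> X"
  shows "\<exists>y\<in>X. y \<noteq> x"
proof -
  obtain a b where "X = {a,b}" "a \<noteq> b" using assms(1) card_2_iff by metis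
  then show ?thesis using assms(2) by auto
qed

lemma card2_elem:
  assumes "card g = 2" "v \<in> g"
  shows "\<exists>b. b \<noteq> v \<and> g = {v, b}"
proof -
  obtain x y where "g = {x,y}" "x \<noteq> y" using assms(1) card_2_iff by metis
  then show ?thesis using assms(2) by auto
qed

lemma four_cycle_color:
  assumes dist: "v \<noteq> a" "v \<noteq> b" "v \<noteq> w" "a \<noteq> b" "a \<noteq> w" "b \<noteq> w"
    and g: "g \<in> {{v,a},{v,b},{b,w},{a,w}}" and g': "g' \<in> {{v,a},{v,b},{b,w},{a,w}}"
    and ne: "g \<noteq> g'" and u: "u \<in> g" "u \<in> g'"
  shows "(g = {v,a} \<or> g = {b,w}) \<noteq> (g' = {v,a} \<or> g' = {b,w})"
proof -
  have n: "{v,a} \<noteq> {v,b}" "{v,a} \<noteq> {b,w}" "{v,a} \<noteq> {a,w}" "{v,b} \<noteq> {b,w}" "{v,b} \<noteq> {a,w}" "{b,w} \<noteq> {a,w}"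
    using dist by (simp_all add: doubleton_eq_iff)
  have d1: "{v,a} \<inter> {b,w} = {}" "{v,b} \<inter> {a,w} = {}" using dist by auto
  from g g' ne u(1) u(2) show ?thesis
    apply (elim insertE emptyE)
    apply (simp_all only: n n[symmetric] simp_thms)
    using d1 by blast+
qed

lemma two_reg_color:
  fixes c :: "'a \<Rightarrow> bool"
  assumes "finite D" "\<forall>e\<in>D. card e = 2" "\<forall>u\<in>\<Union>D. card {e\<in>D. u\<in>e} = 2"
    "\<forall>e\<in>D. \<forall>u\<in>e. \<forall>v\<in>e. u \<noteq> v \<longrightarrow> c u \<noteq> c v"
  shows "\<exists>\<kappa>. \<forall>g\<in>D. \<forall>g'\<in>D. g \<noteq> g' \<longrightarrow> g \<inter> g' \<noteq> {} \<longrightarrow> \<kappa> g \<noteq> (\<kappa> g' :: bool)"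
  using assms
proof (induction "card D" arbitrary: D rule: less_induct)
  case less
  note fin = less.prems(1) and c2 = less.prems(2) and deg = less.prems(3) and bip = less.prems(4)
  show ?case
  proof (cases "D = {}")
    case True then show ?thesis by auto
  next
    case False
    then obtain g0 where g0: "g0 \<in> D" by auto
    obtain v where v: "v \<in> g0" using c2 g0 by (metis all_not_in_conv card.empty zero_neq_numeral)
    obtain a where a: "a \<noteq> v" "g0 = {v,a}" using card2_elem[OF c2[rule_format, OF g0] v] by blast
    have vU: "v \<in> \<Union>D" using g0 v by auto
    have dv: "card {e\<in>D. v\<in>e} = 2" using deg vU by auto
    obtain g2 where g2: "g2 \<in> D" "v \<in> g2" "g2 \<noteq> {v,a}"
      using card2_other[OF dv, of g0] g0 v a by auto
    obtain b where b: "b \<noteq> v" "g2 = {v,b}" using card2_elem[OF c2[rule_format, OF g2(1)] g2(2)] by blast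
    have ab: "a \<noteq> b" using g2 b by auto
    have Ev: "{e\<in>D. v\<in>e} = {{v,a},{v,b}}" using card2_eq[OF dv, of "{v,a}" "{v,b}"] g0 a g2 b by auto
    have bU: "b \<in> \<Union>D" using g2 b by auto
    have db: "card {e\<in>D. b\<in>e} = 2" using deg bU by auto
    obtain g3 where g3: "g3 \<in> D" "b \<in> g3" "g3 \<noteq> {v,b}"
      using card2_other[OF db, of "{v,b}"] g2 b by auto
    obtain w where w: "w \<noteq> b" "g3 = {b,w}" using card2_elem[OF c2[rule_format, OF g3(1)] g3(2)] by blast
    have wv: "w \<noteq> v" using g3 w by auto
    have Eb: "{e\<in>D. b\<in>e} = {{v,b},{b,w}}" using card2_eq[OF db, of "{v,b}" "{b,w}"] g2 b g3 w by auto
    have "c v \<noteq> c a" using bip g0 a by auto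
    moreover have "c v \<noteq> c b" using bip g2 b by auto
    moreover have "c b \<noteq> c w" using bip g3 w by auto
    ultimately have aw: "a \<noteq> w" by auto
    have aU: "a \<in> \<Union>D" using g0 a by auto
    have da: "card {e\<in>D. a\<in>e} = 2" using deg aU by auto
    obtain ga where ga: "ga \<in> D" "a \<in> ga" "ga \<noteq> {v,a}"
      using card2_other[OF da, of "{v,a}"] g0 a by auto
    have Ea: "{e\<in>D. a\<in>e} = {{v,a},ga}" using card2_eq[OF da, of "{v,a}" ga] g0 a ga by auto
    have wU: "w \<in> \<Union>D" using g3 w by auto
    have dw: "card {e\<in>D. w\<in>e} = 2" using deg wU by auto
    obtain gw where gw: "gw \<in> D" "w \<in> gw" "gw \<noteq> {b,w}"
      using card2_other[OF dw, of "{b,w}"] g3 w by auto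
    have Ew: "{e\<in>D. w\<in>e} = {{b,w},gw}" using card2_eq[OF dw, of "{b,w}" gw] g3 w gw by auto
    have inD: "{v,a} \<in> D" "{v,b} \<in> D" "{b,w} \<in> D" using g0 a g2 b g3 w by auto
    show ?thesis
    proof (cases "{a,w} \<in> D")
      case True
      have "{a,w} \<in> {e\<in>D. a\<in>e}" "{a,w} \<in> {e\<in>D. w\<in>e}" using True by auto
      moreover have "{a,w} \<noteq> {v,a}" "{a,w} \<noteq> {b,w}" using wv ab aw by (auto simp: doubleton_eq_iff)
      ultimately have gaw: "ga = {a,w}" and gww: "gw = {a,w}" unfolding Ea Ew by auto
      define Q where "Q = {{v,a},{v,b},{b,w},{a,w}}"
      have key: "e \<in> Q" if "e \<in> D" "u \<in> e" "u \<in> {v,a,b,w}" for e u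
      proof -
        have m: "e \<in> {e\<in>D. u\<in>e}" using that by simp
        from that(3) consider "u = v" | "u = a" | "u = b" | "u = w" by auto
        then show ?thesis
        proof cases
          case 1 then show ?thesis using m unfolding Ev[folded 1] Q_def by auto
        next
          case 2 then show ?thesis using m unfolding Ea[folded 2] gaw Q_def by auto
        next
          case 3 then show ?thesis using m unfolding Eb[folded 3] Q_def by auto
        next
          case 4 then show ?thesis using m unfolding Ew[folded 4] gww Q_def by auto
        qed
      qed
      define D' where "D' = D - Q"
      have QD: "Q \<subseteq> D" using inD True unfolding Q_def by auto
      have vaQ: "{v,a} \<in> Q" unfolding Q_def by auto
      have "D - Q \<subset> D" using vaQ inD(1) by auto
      then have lt: "card D' < card D" unfolding D'_def using fin by (simp add: psubset_card_mono)
      have "\<exists>\<kappa>. \<forall>g\<in>D'. \<forall>g'\<in>D'. g \<noteq> g' \<longrightarrow> g \<inter> g' \<noteq> {} \<longrightarrow> \<kappa> g \<noteq> (\<kappa> g' :: bool)"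
      proof (rule less.hyps[OF lt])
        show "finite D'" using fin unfolding D'_def by auto
        show "\<forall>e\<in>D'. card e = 2" using c2 unfolding D'_def by auto
        show "\<forall>e\<in>D'. \<forall>u\<in>e. \<forall>v\<in>e. u \<noteq> v \<longrightarrow> c u \<noteq> c v" using bip unfolding D'_def by auto
        show "\<forall>u\<in>\<Union>D'. card {e\<in>D'. u\<in>e} = 2"
        proof
          fix u assume "u \<in> \<Union>D'"
          then obtain e where e: "e \<in> D'" "u \<in> e" by auto
          then have un: "u \<notin> {v,a,b,w}" using key[of e u] unfolding D'_def by auto
          then have "{e\<in>D'. u\<in>e} = {e\<in>D. u\<in>e}" unfolding D'_def Q_def by auto
          then show "card {e\<in>D'. u\<in>e} = 2" using deg e unfolding D'_def by auto
        qed
      qed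
      then obtain \<kappa>' where k': "\<forall>g\<in>D'. \<forall>g'\<in>D'. g \<noteq> g' \<longrightarrow> g \<inter> g' \<noteq> {} \<longrightarrow> \<kappa>' g \<noteq> (\<kappa>' g' :: bool)"
        by blast
      define \<kappa> where "\<kappa> g = (if g \<in> Q then (g = {v,a} \<or> g = {b,w}) else \<kappa>' g)" for g
      have dist: "v \<noteq> a" "v \<noteq> b" "v \<noteq> w" "a \<noteq> b" "a \<noteq> w" "b \<noteq> w" using a b wv ab aw w by auto
      show ?thesis
      proof (intro exI ballI impI)
        fix g g' assume gg: "g \<in> D" "g' \<in> D" "g \<noteq> g'" "g \<inter> g' \<noteq> {}"
        then obtain u where u: "u \<in> g" "u \<in> g'" by auto
        show "\<kappa> g \<noteq> \<kappa> g'"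
        proof (cases "u \<in> {v,a,b,w}")
          case True
          then have gQ: "g \<in> Q" "g' \<in> Q" using key gg u by auto
          have "(g = {v,a} \<or> g = {b,w}) \<noteq> (g' = {v,a} \<or> g' = {b,w})"
            by (rule four_cycle_color[OF dist gQ[unfolded Q_def] gg(3) u])
          then show ?thesis using gQ unfolding \<kappa>_def by simp
        next
          case False
          have "g \<notin> Q" "g' \<notin> Q" using False u unfolding Q_def by auto
          then show ?thesis using k' gg unfolding \<kappa>_def D'_def by auto
        qed
      qed
    next
      case False
      define R where "R = {{v,a},{v,b},{b,w}}"
      define D' where "D' = (D - R) \<union> {{a,w}}"
      have RD: "R \<subseteq> D" using inD unfolding R_def by auto
      have dist: "v \<noteq> a" "v \<noteq> b" "v \<noteq> w" "a \<noteq> b" "a \<noteq> w" "b \<noteq> w" using a b wv ab aw w by auto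
      have n: "{v,a} \<noteq> {v,b}" "{v,a} \<noteq> {b,w}" "{v,b} \<noteq> {b,w}"
        using dist by (simp_all add: doubleton_eq_iff)
      have cR: "card R = 3" unfolding R_def using n by simp
      have fR: "finite R" unfolding R_def by simp
      have "card (D - R) = card D - 3" using RD fin cR fR by (simp add: card_Diff_subset)
      moreover have "card D \<ge> 3" using RD fin cR card_mono by metis
      moreover have "card D' = card (D - R) + 1" unfolding D'_def using False fin by simp
      ultimately have lt: "card D' < card D" by linarith
      have nvb: "a \<notin> {v,b}" "a \<notin> {b,w}" "w \<notin> {v,a}" "w \<notin> {v,b}" using dist by auto
      have gaR: "ga \<notin> R" using ga nvb unfolding R_def by auto
      have gwR: "gw \<notin> R" using gw nvb unfolding R_def by auto
      have gaw: "ga \<noteq> {a,w}" using False ga by auto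
      have gww: "gw \<noteq> {a,w}" using False gw by auto
      have vaR: "{v,a} \<in> R" "{v,b} \<in> R" "{b,w} \<in> R" unfolding R_def by auto
      have Rsub: "\<forall>e\<in>R. e \<subseteq> {v,a,b,w}" unfolding R_def by auto
      have "\<exists>\<kappa>. \<forall>g\<in>D'. \<forall>g'\<in>D'. g \<noteq> g' \<longrightarrow> g \<inter> g' \<noteq> {} \<longrightarrow> \<kappa> g \<noteq> (\<kappa> g' :: bool)"
      proof (rule less.hyps[OF lt])
        show "finite D'" using fin unfolding D'_def by auto
        show "\<forall>e\<in>D'. card e = 2" using c2 dist unfolding D'_def by auto
        show "\<forall>e\<in>D'. \<forall>u\<in>e. \<forall>v\<in>e. u \<noteq> v \<longrightarrow> c u \<noteq> c v"
          using bip \<open>c v \<noteq> c a\<close> \<open>c v \<noteq> c b\<close> \<open>c b \<noteq> c w\<close> unfolding D'_def by auto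
        show "\<forall>u\<in>\<Union>D'. card {e\<in>D'. u\<in>e} = 2"
        proof
          fix u assume uU: "u \<in> \<Union>D'"
          have base: "{e\<in>D'. u\<in>e} = (if u \<in> {a,w} then insert {a,w} ({e\<in>D. u\<in>e} - R) else {e\<in>D. u\<in>e} - R)"
            unfolding D'_def by auto
          show "card {e\<in>D'. u\<in>e} = 2"
          proof (cases "u = a")
            case True
            have "{e\<in>D. u\<in>e} - R = {ga}" unfolding True Ea using gaR vaR by auto
            then have "{e\<in>D'. u\<in>e} = {{a,w}, ga}" using base True by simp
            then show ?thesis using gaw by simp
          next
            case ua: False
            show ?thesis
            proof (cases "u = w")
              case True
              have "{e\<in>D. u\<in>e} - R = {gw}" unfolding True Ew using gwR vaR by auto
              then have "{e\<in>D'. u\<in>e} = {{a,w}, gw}" using base True by simp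
              then show ?thesis using gww by simp
            next
              case uw: False
              obtain e where e: "e \<in> D'" "u \<in> e" using uU by auto
              then have eD: "e \<in> D - R" using ua uw unfolding D'_def by auto
              have "u \<noteq> v"
              proof
                assume "u = v"
                then have "e \<in> {e\<in>D. v\<in>e}" using eD e by simp
                then show False using eD vaR unfolding Ev by auto
              qed
              moreover have "u \<noteq> b"
              proof
                assume "u = b"
                then have "e \<in> {e\<in>D. b\<in>e}" using eD e by simp
                then show False using eD vaR unfolding Eb by auto
              qed
              ultimately have "{e\<in>D. u\<in>e} - R = {e\<in>D. u\<in>e}" using ua uw Rsub by blast
              then have "{e\<in>D'. u\<in>e} = {e\<in>D. u\<in>e}" using base ua uw by simp
              then show ?thesis using deg eD e by auto
            qed
          qed
        qed
      qed
      then obtain \<kappa>' where k': "\<forall>g\<in>D'. \<forall>g'\<in>D'. g \<noteq> g' \<longrightarrow> g \<inter> g' \<noteq> {} \<longrightarrow> \<kappa>' g \<noteq> (\<kappa>' g' :: bool)"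
        by blast
      define k where "k = \<kappa>' {a,w}"
      define \<kappa> where "\<kappa> g = (if g = {v,a} \<or> g = {b,w} then k else if g = {v,b} then \<not> k else \<kappa>' g)" for g
      have kva: "\<kappa> {v,a} = k" "\<kappa> {b,w} = k" "\<kappa> {v,b} = (\<not> k)" unfolding \<kappa>_def using n by auto
      have kother: "\<kappa> g = \<kappa>' g" if "g \<notin> R" for g using that vaR unfolding \<kappa>_def by auto
      have awD': "{a,w} \<in> D'" unfolding D'_def by auto
      have gaD': "ga \<in> D'" using ga gaR unfolding D'_def by auto
      have gwD': "gw \<in> D'" using gw gwR unfolding D'_def by auto
      have "ga \<inter> {a,w} \<noteq> {}" using ga(2) by auto
      then have kga: "\<kappa> ga \<noteq> k" using k'[rule_format, OF gaD' awD' gaw] kother[OF gaR] unfolding k_def by simp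
      have "gw \<inter> {a,w} \<noteq> {}" using gw(2) by auto
      then have kgw: "\<kappa> gw \<noteq> k" using k'[rule_format, OF gwD' awD' gww] kother[OF gwR] unfolding k_def by simp
      have Ev2: "g' = {v,a} \<or> g' = {v,b}" if "g' \<in> D" "v \<in> g'" for g'
      proof -
        have "g' \<in> {e\<in>D. v\<in>e}" using that by simp
        then show ?thesis unfolding Ev by simp
      qed
      have Eb2: "g' = {v,b} \<or> g' = {b,w}" if "g' \<in> D" "b \<in> g'" for g'
      proof -
        have "g' \<in> {e\<in>D. b\<in>e}" using that by simp
        then show ?thesis unfolding Eb by simp
      qed
      have Ea2: "g' = {v,a} \<or> g' = ga" if "g' \<in> D" "a \<in> g'" for g'
      proof -
        have "g' \<in> {e\<in>D. a\<in>e}" using that by simp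
        then show ?thesis unfolding Ea by simp
      qed
      have Ew2: "g' = {b,w} \<or> g' = gw" if "g' \<in> D" "w \<in> g'" for g'
      proof -
        have "g' \<in> {e\<in>D. w\<in>e}" using that by simp
        then show ?thesis unfolding Ew by simp
      qed
      have half: "\<kappa> g \<noteq> \<kappa> g'" if gg: "g \<in> D" "g' \<in> D" "g \<noteq> g'" "g \<inter> g' \<noteq> {}" "g \<in> R" for g g'
      proof -
        obtain u where u: "u \<in> g" "u \<in> g'" using gg by auto
        have "g = {v,a} \<or> g = {v,b} \<or> g = {b,w}" using gg(5) unfolding R_def by auto
        then show ?thesis
        proof (elim disjE)
          assume g: "g = {v,a}"
          then have "u = v \<or> u = a" using u by auto
          then show ?thesis
          proof
            assume "u = v" then have "g' = {v,b}" using Ev2[OF gg(2)] gg(3) g u by auto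
            then show ?thesis using g kva by simp
          next
            assume "u = a" then have "g' = ga" using Ea2[OF gg(2)] gg(3) g u by auto
            then show ?thesis using g kva kga by simp
          qed
        next
          assume g: "g = {v,b}"
          then have "u = v \<or> u = b" using u by auto
          then show ?thesis
          proof
            assume "u = v" then have "g' = {v,a}" using Ev2[OF gg(2)] gg(3) g u by auto
            then show ?thesis using g kva by simp
          next
            assume "u = b" then have "g' = {b,w}" using Eb2[OF gg(2)] gg(3) g u by auto
            then show ?thesis using g kva by simp
          qed
        next
          assume g: "g = {b,w}"
          then have "u = b \<or> u = w" using u by auto
          then show ?thesis
          proof
            assume "u = b" then have "g' = {v,b}" using Eb2[OF gg(2)] gg(3) g u by auto
            then show ?thesis using g kva by simp
          next
            assume "u = w" then have "g' = gw" using Ew2[OF gg(2)] gg(3) g u by auto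
            then show ?thesis using g kva kgw by simp
          qed
        qed
      qed
      show ?thesis
      proof (intro exI ballI impI)
        fix g g' assume gg: "g \<in> D" "g' \<in> D" "g \<noteq> g'" "g \<inter> g' \<noteq> {}"
        show "\<kappa> g \<noteq> \<kappa> g'"
        proof (cases "g \<in> R \<or> g' \<in> R")
          case True
          then show ?thesis
          proof
            assume "g \<in> R" then show ?thesis using half[OF gg] by blast
          next
            assume "g' \<in> R"
            moreover have "g' \<inter> g \<noteq> {}" using gg(4) by blast
            ultimately show ?thesis using half[OF gg(2) gg(1) gg(3)[symmetric]] by metis
          qed
        next
          case False
          then have "g \<in> D'" "g' \<in> D'" "\<kappa> g = \<kappa>' g" "\<kappa> g' = \<kappa>' g'" using gg kother unfolding D'_def by auto
          then show ?thesis using k' gg by auto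
        qed
      qed
    qed
  qed
qed

lemma handshake:
  assumes "finite C" "\<forall>e\<in>C. finite e"
  shows "(\<Sum>v\<in>\<Union>C. card {e\<in>C. v\<in>e}) = (\<Sum>e\<in>C. card e)"
proof -
  have fU: "finite (\<Union>C)" using assms by auto
  have "(\<Sum>v\<in>\<Union>C. card {e\<in>C. v\<in>e}) = (\<Sum>v\<in>\<Union>C. \<Sum>e\<in>C. if v \<in> e then 1 else 0)"
    by (rule sum.cong[OF refl]) (use assms(1) in \<open>simp add: sum.inter_filter[symmetric]\<close>)
  also have "\<dots> = (\<Sum>e\<in>C. \<Sum>v\<in>\<Union>C. if v \<in> e then 1 else 0)" by (rule sum.swap)
  also have "\<dots> = (\<Sum>e\<in>C. card e)"
  proof (rule sum.cong[OF refl])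
    fix e assume e: "e \<in> C"
    have "(\<Sum>v\<in>\<Union>C. if v \<in> e then 1 else 0) = card (\<Union>C \<inter> e)"
      using fU by (simp add: sum.If_cases)
    also have "\<Union>C \<inter> e = e" using e by auto
    finally show "(\<Sum>v\<in>\<Union>C. if v \<in> e then 1 else 0) = card e" .
  qed
  finally show ?thesis .
qed

lemma cycle_card:
  assumes "is_cycle E C" "\<forall>e\<in>C. card e = 2"
  shows "card (\<Union>C) = card C"
proof -
  have fin: "finite C" using assms unfolding is_cycle_def by auto
  have fe: "\<forall>e\<in>C. finite e" using assms(2) by (metis card.infinite zero_neq_numeral)
  have d: "\<forall>v\<in>\<Union>C. card {e\<in>C. v\<in>e} = 2" using assms unfolding is_cycle_def degree_def by auto
  have "(\<Sum>v\<in>\<Union>C. card {e\<in>C. v\<in>e}) = (\<Sum>v\<in>\<Union>C. 2)" using d by (intro sum.cong) auto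
  moreover have "(\<Sum>e\<in>C. card e) = (\<Sum>e\<in>C. 2)" using assms(2) by simp
  ultimately have "2 * card (\<Union>C) = 2 * card C" using handshake[OF fin fe] by simp
  then show ?thesis by simp
qed

locale rcers =
  fixes V :: "'a set" and E :: "'a set set" and Fs :: "'f set" and bd :: "'f \<Rightarrow> 'a set set" and out :: 'f
  assumes reg: "regular_cers V E Fs bd out"
begin

abbreviation "I \<equiv> Fs - {out}"

lemma inner_eq: "inner_faces Fs out = I" unfolding inner_faces_def by simp

lemma finV: "finite V" and Esub: "e \<in> E \<Longrightarrow> e \<subseteq> V" and Ecard: "e \<in> E \<Longrightarrow> card e = 2"
  using reg unfolding regular_cers_def cers_def simple_graph_def by auto

lemma finE: "finite E"
proof (rule finite_subset[of _ "Pow V"])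
  show "E \<subseteq> Pow V" using Esub by auto
qed (use finV in auto)

lemma bip_ex: "\<exists>c::'a\<Rightarrow>bool. \<forall>e\<in>E. \<forall>u\<in>e. \<forall>v\<in>e. u \<noteq> v \<longrightarrow> c u \<noteq> c v"
  using reg unfolding regular_cers_def cers_def bipartite_def by auto

lemma finFs: "finite Fs" and outFs: "out \<in> Fs" and cyc: "F \<in> Fs \<Longrightarrow> is_cycle E (bd F)"
  and two_faces: "e \<in> E \<Longrightarrow> card {F\<in>Fs. e \<in> bd F} = 2"
  and euler: "int (card V) - int (card E) + int (card Fs) = 2"
  using reg unfolding regular_cers_def cers_def plane_faces_def by auto

lemma degin: "v \<in> V \<Longrightarrow> v \<notin> \<Union>(bd out) \<Longrightarrow> card {e\<in>E. v\<in>e} = 3"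
  and degout: "v \<in> V \<Longrightarrow> v \<in> \<Union>(bd out) \<Longrightarrow> card {e\<in>E. v\<in>e} = 2 \<or> card {e\<in>E. v\<in>e} = 3"
  using reg unfolding regular_cers_def cers_def degree_def by auto

lemma tree: "is_tree I (face_adj bd)"
  using reg unfolding regular_cers_def cers_def inner_faces_def by auto

lemma regul: "card I \<le> 2 \<or> (\<forall>F\<in>I. \<forall>F'\<in>I. \<forall>F''\<in>I. \<forall>e f.
         F \<noteq> F' \<and> F' \<noteq> F'' \<and> F \<noteq> F'' \<and> e \<in> bd F \<and> e \<in> bd F' \<and> f \<in> bd F' \<and> f \<in> bd F''
         \<longrightarrow> even (line_dist E e f))"
  using reg unfolding regular_cers_def inner_faces_def by auto

lemma bdE: "F \<in> Fs \<Longrightarrow> bd F \<subseteq> E" using cyc unfolding is_cycle_def by auto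
lemma finbd: "F \<in> Fs \<Longrightarrow> finite (bd F)" using cyc unfolding is_cycle_def by auto
lemma cycdeg: "F \<in> Fs \<Longrightarrow> v \<in> \<Union>(bd F) \<Longrightarrow> card {e\<in>bd F. v\<in>e} = 2"
  using cyc unfolding is_cycle_def degree_def by auto
lemma vV: "F \<in> Fs \<Longrightarrow> v \<in> \<Union>(bd F) \<Longrightarrow> v \<in> V" using bdE Esub by blast

lemma degle3: "v \<in> V \<Longrightarrow> card {e\<in>E. v\<in>e} \<le> 3"
  using degin degout by fastforce

lemma finEv: "finite {e\<in>E. v\<in>e}" using finE by auto

lemma share_edge:
  assumes "F1 \<in> Fs" "F2 \<in> Fs" "v \<in> \<Union>(bd F1)" "v \<in> \<Union>(bd F2)"
  shows "\<exists>e. e \<in> bd F1 \<and> e \<in> bd F2 \<and> v \<in> e"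
proof (rule ccontr)
  assume nc: "\<not> ?thesis"
  define A where "A = {e\<in>bd F1. v\<in>e}"
  define B where "B = {e\<in>bd F2. v\<in>e}"
  have cA: "card A = 2" "card B = 2" unfolding A_def B_def using cycdeg assms by auto
  have dis: "A \<inter> B = {}" using nc unfolding A_def B_def by auto
  have sub: "A \<union> B \<subseteq> {e\<in>E. v\<in>e}" unfolding A_def B_def using bdE assms by auto
  have fAB: "finite A" "finite B" using cA by (metis card.infinite zero_neq_numeral)+
  have "card (A \<union> B) = 4" using card_Un_disjoint[OF fAB dis] cA by simp
  moreover have "card (A \<union> B) \<le> card {e\<in>E. v\<in>e}" using card_mono[OF finEv sub] .
  moreover have "v \<in> V" using vV assms by blast
  ultimately show False using degle3 by fastforce
qed

lemma faces_edge:
  assumes "e \<in> E"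
  obtains F1 F2 where "F1 \<noteq> F2" "F1 \<in> Fs" "F2 \<in> Fs" "e \<in> bd F1" "e \<in> bd F2"
    "\<And>F. F \<in> Fs \<Longrightarrow> e \<in> bd F \<Longrightarrow> F = F1 \<or> F = F2"
proof -
  obtain F1 F2 where F: "F1 \<noteq> F2" "{F\<in>Fs. e \<in> bd F} = {F1,F2}"
    using two_faces[OF assms] card_2_iff by metis
  have m: "F1 \<in> {F\<in>Fs. e \<in> bd F}" "F2 \<in> {F\<in>Fs. e \<in> bd F}" unfolding F(2) by simp_all
  have o: "F = F1 \<or> F = F2" if "F \<in> Fs" "e \<in> bd F" for F
  proof -
    have "F \<in> {F\<in>Fs. e \<in> bd F}" using that by simp
    then show ?thesis unfolding F(2) by simp
  qed
  show ?thesis using that F(1) m o by simp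
qed

lemma three_faces:
  assumes "e \<in> E" "F1 \<in> Fs" "F2 \<in> Fs" "F3 \<in> Fs" "F1 \<noteq> F2" "F1 \<noteq> F3" "F2 \<noteq> F3"
    "e \<in> bd F1" "e \<in> bd F2" "e \<in> bd F3"
  shows False
proof -
  have "{F1,F2,F3} \<subseteq> {F\<in>Fs. e \<in> bd F}" using assms by auto
  moreover have "finite {F\<in>Fs. e \<in> bd F}" using finFs by auto
  ultimately have "card {F1,F2,F3} \<le> 2" using two_faces[OF assms(1)] card_mono by metis
  then show False using assms(5-7) by simp
qed

lemma line_dist_adj:
  assumes "a \<in> E" "b \<in> E" "a \<noteq> b" "v \<in> a" "v \<in> b"
  shows "line_dist E a b = 1"
  unfolding line_dist_def
proof (rule Least_equality)
  show "(line_adj E ^^ 1) a b" using assms unfolding line_adj_def by auto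
  show "\<And>y. (line_adj E ^^ y) a b \<Longrightarrow> 1 \<le> y"
  proof -
    fix y assume "(line_adj E ^^ y) a b"
    then show "1 \<le> y" using assms(3) by (cases y) auto
  qed
qed

end

context rcers begin

lemma card3_eq:
  assumes "card X = 3" "a \<in> X" "b \<in> X" "c \<in> X" "a \<noteq> b" "a \<noteq> c" "b \<noteq> c"
  shows "X = {a,b,c}"
proof -
  have "finite X" using assms(1) by (metis card.infinite zero_neq_numeral)
  moreover have "{a,b,c} \<subseteq> X" using assms by auto
  moreover have "card {a,b,c} = card X" using assms by auto
  ultimately show ?thesis using card_subset_eq by metis
qed

lemma all_on_out:
  assumes v: "v \<in> V"
  shows "v \<in> \<Union>(bd out)"
proof (rule ccontr)
  assume nv: "v \<notin> \<Union>(bd out)"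
  define X where "X = {e\<in>E. v\<in>e}"
  have cX: "card X = 3" unfolding X_def using degin[OF v nv] .
  then obtain a where aX: "a \<in> X" by (metis card.empty ex_in_conv zero_neq_numeral)
  have aE: "a \<in> E" and va: "v \<in> a" using aX unfolding X_def by auto
  obtain H1 H2 where H12: "H1 \<noteq> H2" and H1: "H1 \<in> Fs" and H2: "H2 \<in> Fs" and H1': "a \<in> bd H1"
    and H2': "a \<in> bd H2" and "\<And>F. F \<in> Fs \<Longrightarrow> a \<in> bd F \<Longrightarrow> F = H1 \<or> F = H2"
    by (rule faces_edge[OF aE]) blast
  note H1 = H1 H1' and H2 = H2 H2' 
  have nout: "H1 \<noteq> out" "H2 \<noteq> out" using H1 H2 va nv by auto
  have vH: "v \<in> \<Union>(bd H1)" "v \<in> \<Union>(bd H2)" using H1 H2 va by auto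
  have c1: "card {e\<in>bd H1. v\<in>e} = 2" using cycdeg H1 vH by auto
  have c2: "card {e\<in>bd H2. v\<in>e} = 2" using cycdeg H2 vH by auto
  obtain b1 where b1: "b1 \<in> bd H1" "v \<in> b1" "b1 \<noteq> a" using card2_other[OF c1, of a] H1 va by auto
  obtain b2 where b2: "b2 \<in> bd H2" "v \<in> b2" "b2 \<noteq> a" using card2_other[OF c2, of a] H2 va by auto
  have A1: "{e\<in>bd H1. v\<in>e} = {a,b1}" using card2_eq[OF c1] H1 va b1 by auto
  have A2: "{e\<in>bd H2. v\<in>e} = {a,b2}" using card2_eq[OF c2] H2 va b2 by auto
  have b1E: "b1 \<in> E" using bdE H1 b1 by blast
  show False
  proof (cases "b1 = b2")
    case True
    have b1X: "b1 \<in> X" using b1E b1 unfolding X_def by auto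
    have "card (X - {a,b1}) \<ge> 1"
    proof -
      have "finite X" using finEv unfolding X_def .
      then have "card (X - {a,b1}) = card X - card {a,b1}" using aX b1X by (simp add: card_Diff_subset)
      then show ?thesis using cX b1(3) by simp
    qed
    then obtain c where cX': "c \<in> X" "c \<notin> {a,b1}" by (metis card.empty Diff_iff ex_in_conv not_one_le_zero)
    have cE: "c \<in> E" and vc: "v \<in> c" using cX' unfolding X_def by auto
    obtain K where K: "K \<in> Fs" "c \<in> bd K"
    proof -
      obtain K1 K2 where "K1 \<noteq> K2" "K1 \<in> Fs" "K2 \<in> Fs" "c \<in> bd K1" "c \<in> bd K2"
        "\<And>F. F \<in> Fs \<Longrightarrow> c \<in> bd F \<Longrightarrow> F = K1 \<or> F = K2" by (rule faces_edge[OF cE]) blast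
      then show ?thesis using that by blast
    qed
    have vK: "v \<in> \<Union>(bd K)" using K vc by auto
    have cK: "card {e\<in>bd K. v\<in>e} = 2" using cycdeg K vK by auto
    obtain d where d: "d \<in> bd K" "v \<in> d" "d \<noteq> c" using card2_other[OF cK, of c] K vc by auto
    have dX: "d \<in> X" using d bdE K unfolding X_def by auto
    have X3: "X = {a,b1,c}" using card3_eq[OF cX aX b1X cX'(1)] b1(3) cX'(2) by auto
    have dd: "d = a \<or> d = b1" using dX d(3) unfolding X3 by auto
    have KH1: "K \<noteq> H1" using K A1 cX'(2) vc by auto
    have KH2: "K \<noteq> H2" using K A2 cX'(2) vc True by auto
    from dd show False
    proof
      assume "d = a"
      then show False using three_faces[OF aE H1(1) H2(1) K(1) H12(1) KH1[symmetric] KH2[symmetric] H1(2) H2(2)] d by auto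
    next
      assume "d = b1"
      then show False using three_faces[OF b1E H1(1) H2(1) K(1) H12(1) KH1[symmetric] KH2[symmetric] b1(1)] b2(1) True d by auto
    qed
  next
    case False
    have nb: "b1 \<notin> bd H2"
    proof
      assume "b1 \<in> bd H2"
      then have "b1 \<in> {e\<in>bd H2. v\<in>e}" using b1 by simp
      then show False using A2 b1(3) False by auto
    qed
    obtain K where K: "K \<in> Fs" "b1 \<in> bd K" "K \<noteq> H1"
    proof -
      obtain K1 K2 where KK: "K1 \<noteq> K2" "K1 \<in> Fs" "K2 \<in> Fs" "b1 \<in> bd K1" "b1 \<in> bd K2"
        "\<And>F. F \<in> Fs \<Longrightarrow> b1 \<in> bd F \<Longrightarrow> F = K1 \<or> F = K2" by (rule faces_edge[OF b1E]) blast
      then have "H1 = K1 \<or> H1 = K2" using H1 b1 by blast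
      then show ?thesis using that KK by metis
    qed
    have KH2: "K \<noteq> H2" using K nb by auto
    have Kout: "K \<noteq> out" using K b1 nv by auto
    have inI: "H1 \<in> I" "H2 \<in> I" "K \<in> I" using H1 H2 K nout Kout by auto
    have "card {H1,H2,K} = 3" using H12(1) K(3) KH2 by auto
    moreover have "{H1,H2,K} \<subseteq> I" using inI by auto
    moreover have "finite I" using finFs by auto
    ultimately have "card I \<ge> 3" by (metis card_mono)
    then have R: "\<forall>F\<in>I. \<forall>F'\<in>I. \<forall>F''\<in>I. \<forall>e f.
         F \<noteq> F' \<and> F' \<noteq> F'' \<and> F \<noteq> F'' \<and> e \<in> bd F \<and> e \<in> bd F' \<and> f \<in> bd F' \<and> f \<in> bd F''
         \<longrightarrow> even (line_dist E e f)" using regul by auto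
    have "even (line_dist E a b1)"
      using R[rule_format, of H2 H1 K a b1] inI H12(1) K(3) KH2 H1 H2 b1 K by auto
    moreover have "line_dist E a b1 = 1" using line_dist_adj[OF aE b1E b1(3)[symmetric] va b1(2)] .
    ultimately show False by simp
  qed
qed

lemma V_eq: "V = \<Union>(bd out)"
  using all_on_out bdE[OF outFs] Esub by blast

definition Ch where "Ch = E - bd out"

lemma card_I: "card I = card Ch + 1"
proof -
  have cV: "card V = card (bd out)"
    using V_eq cycle_card[OF cyc[OF outFs]] bdE[OF outFs] Ecard by auto
  have cE: "card E = card (bd out) + card Ch"
    unfolding Ch_def using bdE[OF outFs] finE by (metis card_Diff_subset card_mono le_add_diff_inverse finite_subset)
  have cF: "card Fs = card I + 1" using outFs finFs
    by (metis Suc_eq_plus1 card.remove)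
  show ?thesis using euler cV cE cF by linarith
qed

definition P where "P = {{a,b}|a b. a \<in> I \<and> b \<in> I \<and> face_adj bd a b}"

lemma card_P: "card P = card Ch"
  using tree card_I unfolding is_tree_def P_def by auto

lemma in_Ch:
  assumes "H \<in> I" "K \<in> I" "H \<noteq> K" "d \<in> bd H" "d \<in> bd K"
  shows "d \<in> Ch" and "{F\<in>Fs. d \<in> bd F} = {H,K}"
proof -
  have dE: "d \<in> E" using assms bdE by auto
  obtain F1 F2 where F: "F1 \<noteq> F2" "F1 \<in> Fs" "F2 \<in> Fs" "d \<in> bd F1" "d \<in> bd F2"
    "\<And>F. F \<in> Fs \<Longrightarrow> d \<in> bd F \<Longrightarrow> F = F1 \<or> F = F2" by (rule faces_edge[OF dE]) blast
  have o: "F = H \<or> F = K" if "F \<in> Fs" "d \<in> bd F" for F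
    using F(6)[OF that] F(6)[of H] F(6)[of K] assms by auto
  show eq: "{F\<in>Fs. d \<in> bd F} = {H,K}"
  proof (rule set_eqI)
    fix F show "F \<in> {F\<in>Fs. d \<in> bd F} \<longleftrightarrow> F \<in> {H,K}" using o assms by auto
  qed
  have "d \<notin> bd out"
  proof
    assume "d \<in> bd out"
    then have "out = H \<or> out = K" using o outFs by blast
    then show False using assms by auto
  qed
  then show "d \<in> Ch" unfolding Ch_def using dE by simp
qed

lemma phi_Ch:
  assumes "e \<in> Ch"
  obtains H K where "H \<in> I" "K \<in> I" "H \<noteq> K" "e \<in> bd H" "e \<in> bd K"
proof -
  have eE: "e \<in> E" and no: "e \<notin> bd out" using assms unfolding Ch_def by auto
  obtain H K where HK: "H \<noteq> K" "H \<in> Fs" "K \<in> Fs" "e \<in> bd H" "e \<in> bd K"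
    and "\<And>F. F \<in> Fs \<Longrightarrow> e \<in> bd F \<Longrightarrow> F = H \<or> F = K" by (rule faces_edge[OF eE]) blast
  then have "H \<in> I" "K \<in> I" using no by auto
  then show ?thesis using HK that by blast
qed

lemma phi_img: "(\<lambda>e. {F\<in>Fs. e \<in> bd F}) ` Ch = P"
proof
  show "(\<lambda>e. {F\<in>Fs. e \<in> bd F}) ` Ch \<subseteq> P"
  proof
    fix x assume "x \<in> (\<lambda>e. {F\<in>Fs. e \<in> bd F}) ` Ch"
    then obtain e where e: "e \<in> Ch" "x = {F\<in>Fs. e \<in> bd F}" by auto
    obtain H K where HK: "H \<in> I" "K \<in> I" "H \<noteq> K" "e \<in> bd H" "e \<in> bd K" by (rule phi_Ch[OF e(1)]) blast
    have x: "x = {H,K}" using in_Ch(2)[OF HK] e(2) by simp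
    have "face_adj bd H K" unfolding face_adj_def using HK by auto
    then show "x \<in> P" unfolding P_def x using HK by blast
  qed
next
  show "P \<subseteq> (\<lambda>e. {F\<in>Fs. e \<in> bd F}) ` Ch"
  proof
    fix x assume "x \<in> P"
    then obtain H K where HK: "x = {H,K}" "H \<in> I" "K \<in> I" "face_adj bd H K" unfolding P_def by blast
    then obtain d where d: "d \<in> bd H" "d \<in> bd K" "H \<noteq> K" unfolding face_adj_def by blast
    have dC: "d \<in> Ch" using in_Ch(1)[OF HK(2,3) d(3) d(1,2)] .
    have xe: "x = {F\<in>Fs. d \<in> bd F}" using in_Ch(2)[OF HK(2,3) d(3) d(1,2)] HK(1) by simp
    show "x \<in> (\<lambda>e. {F\<in>Fs. e \<in> bd F}) ` Ch" by (rule image_eqI[where f="\<lambda>e. {F\<in>Fs. e \<in> bd F}", OF xe dC])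
  qed
qed

lemma phi_inj: "inj_on (\<lambda>e. {F\<in>Fs. e \<in> bd F}) Ch"
proof (rule eq_card_imp_inj_on)
  show "finite Ch" unfolding Ch_def using finE by simp
  show "card ((\<lambda>e. {F\<in>Fs. e \<in> bd F}) ` Ch) = card Ch" using phi_img card_P by simp
qed

lemma unique_shared:
  assumes "H \<in> I" "K \<in> I" "H \<noteq> K" "d \<in> bd H" "d \<in> bd K" "e \<in> bd H" "e \<in> bd K"
  shows "d = e"
proof -
  have 1: "d \<in> Ch" "{F\<in>Fs. d \<in> bd F} = {H,K}" using in_Ch[OF assms(1-5)] by auto
  have 2: "e \<in> Ch" "{F\<in>Fs. e \<in> bd F} = {H,K}" using in_Ch[OF assms(1-3,6,7)] by auto
  have "{F\<in>Fs. d \<in> bd F} = {F\<in>Fs. e \<in> bd F}" using 1(2) 2(2) by simp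
  then show ?thesis by (rule inj_onD[OF phi_inj _ 1(1) 2(1)])
qed

end

context rcers begin

lemma fa_sym: "face_adj bd x y \<Longrightarrow> face_adj bd y x" unfolding face_adj_def by auto
lemma fa_irr: "\<not> face_adj bd x x" unfolding face_adj_def by auto

definition nb :: "'f \<Rightarrow> 'a set \<Rightarrow> 'f" where
  "nb H e = (THE K. K \<in> Fs \<and> K \<noteq> H \<and> e \<in> bd K)"

lemma nb_unique:
  assumes "H \<in> Fs" "e \<in> bd H" "K \<in> Fs" "K \<noteq> H" "e \<in> bd K"
  shows "nb H e = K"
  unfolding nb_def
proof (rule the_equality)
  show "K \<in> Fs \<and> K \<noteq> H \<and> e \<in> bd K" using assms by simp
  have eE: "e \<in> E" using assms bdE by auto
  obtain F1 F2 where F: "F1 \<noteq> F2" "F1 \<in> Fs" "F2 \<in> Fs" "e \<in> bd F1" "e \<in> bd F2"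
    "\<And>F. F \<in> Fs \<Longrightarrow> e \<in> bd F \<Longrightarrow> F = F1 \<or> F = F2" by (rule faces_edge[OF eE]) blast
  fix K' assume K': "K' \<in> Fs \<and> K' \<noteq> H \<and> e \<in> bd K'"
  have "H = F1 \<or> H = F2" using F(6) assms by blast
  moreover have "K = F1 \<or> K = F2" using F(6) assms by blast
  moreover have "K' = F1 \<or> K' = F2" using F(6) K' by blast
  ultimately show "K' = K" using K' assms(4) by blast
qed

lemma nb_prop:
  assumes "H \<in> I" "e \<in> bd H" "e \<in> Ch"
  shows "nb H e \<in> I" "nb H e \<noteq> H" "e \<in> bd (nb H e)"
proof -
  obtain A B where AB: "A \<in> I" "B \<in> I" "A \<noteq> B" "e \<in> bd A" "e \<in> bd B" by (rule phi_Ch[OF assms(3)]) blast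
  obtain K where K: "K \<in> I" "K \<noteq> H" "e \<in> bd K"
  proof (cases "A = H")
    case True then show ?thesis using that AB by blast
  next
    case False then show ?thesis using that AB by blast
  qed
  have "nb H e = K" using nb_unique[of H e K] assms K by auto
  then show "nb H e \<in> I" "nb H e \<noteq> H" "e \<in> bd (nb H e)" using K by auto
qed

definition Rr :: "'f \<Rightarrow> 'f \<Rightarrow> 'f \<Rightarrow> bool" where
  "Rr H = (\<lambda>a b. a \<in> I - {H} \<and> b \<in> I - {H} \<and> face_adj bd a b)"

lemma Rr_sym: "Rr H x y \<Longrightarrow> Rr H y x" unfolding Rr_def using fa_sym by auto

lemma Rr_in: "(Rr H)\<^sup>*\<^sup>* x y \<Longrightarrow> x \<in> I - {H} \<Longrightarrow> y \<in> I - {H}"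
  by (induction rule: rtranclp_induct) (auto simp: Rr_def)

lemma tree_sep:
  assumes H: "H \<in> I" and d: "d \<in> bd H" "d \<in> Ch" and e: "e \<in> bd H" "e \<in> Ch" and de: "d \<noteq> e"
  shows "\<not> (Rr H)\<^sup>*\<^sup>* (nb H d) (nb H e)"
proof
  assume p: "(Rr H)\<^sup>*\<^sup>* (nb H d) (nb H e)"
  have nd: "nb H d \<in> I" "nb H d \<noteq> H" "d \<in> bd (nb H d)" using nb_prop[OF H d] by auto
  have ne: "nb H e \<in> I" "nb H e \<noteq> H" "e \<in> bd (nb H e)" using nb_prop[OF H e] by auto
  have neq: "nb H d \<noteq> nb H e"
  proof
    assume eq: "nb H d = nb H e"
    have "d = e" by (rule unique_shared[OF H nd(1) nd(2)[symmetric] d(1) nd(3) e(1)]) (use ne(3) eq in simp)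
    then show False using de by simp
  qed
  have a1: "face_adj bd H (nb H d)" unfolding face_adj_def using nd d by auto
  have a2: "face_adj bd H (nb H e)" unfolding face_adj_def using ne e by auto
  have p': "(\<lambda>x y. x \<in> I - {H} \<and> y \<in> I - {H} \<and> face_adj bd x y)\<^sup>*\<^sup>* (nb H d) (nb H e)"
    using p unfolding Rr_def .
  show False
    by (rule tree_no_cycle[OF tree fa_sym fa_irr H nd(1) ne(1) a1 a2 neq p'])
qed

lemma branch_exists:
  assumes H: "H \<in> I" and g: "g \<in> E" "g \<notin> bd H"
  shows "\<exists>e. e \<in> bd H \<and> e \<in> Ch \<and> (\<exists>K. (Rr H)\<^sup>*\<^sup>* (nb H e) K \<and> g \<in> bd K)"
proof -
  obtain F1 F2 where F: "F1 \<noteq> F2" "F1 \<in> Fs" "F2 \<in> Fs" "g \<in> bd F1" "g \<in> bd F2"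
    by (rule faces_edge[OF g(1)]) blast
  obtain K0 where K0: "K0 \<in> I" "g \<in> bd K0"
  proof (cases "F1 = out")
    case True then show ?thesis using that F by blast
  next
    case False then show ?thesis using that F by blast
  qed
  have K0H: "K0 \<noteq> H" using K0 g by auto
  define RI where "RI = (\<lambda>a b. a \<in> I \<and> b \<in> I \<and> face_adj bd a b)"
  have conn: "RI\<^sup>*\<^sup>* H K0" using tree H K0 unfolding is_tree_def RI_def by blast
  have claim: "K = H \<or> (\<exists>e. e \<in> bd H \<and> e \<in> Ch \<and> (Rr H)\<^sup>*\<^sup>* (nb H e) K)" if "RI\<^sup>*\<^sup>* H K" for K
    using that
  proof (induction rule: rtranclp_induct)
    case base then show ?case by simp
  next
    case (step K' K)
    show ?case
    proof (cases "K = H")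
      case True then show ?thesis by simp
    next
      case KH: False
      have KI: "K \<in> I" "K' \<in> I" "face_adj bd K' K" using step(2) unfolding RI_def by auto
      show ?thesis
      proof (cases "K' = H")
        case True
        then obtain e where e: "e \<in> bd H" "e \<in> bd K" using KI unfolding face_adj_def by auto
        have eC: "e \<in> Ch" using in_Ch(1)[OF H KI(1) KH[symmetric] e] .
        have "nb H e = K" using nb_unique[of H e K] H KI KH e by auto
        then show ?thesis using e eC by auto
      next
        case False
        then obtain e where e: "e \<in> bd H" "e \<in> Ch" "(Rr H)\<^sup>*\<^sup>* (nb H e) K'" using step(3) by auto
        have "Rr H K' K" unfolding Rr_def using KI KH False by auto
        then show ?thesis using e by (meson rtranclp.rtrancl_into_rtrancl)
      qed
    qed
  qed
  show ?thesis using claim[OF conn] K0H K0 by blast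
qed

lemma branch_meet:
  assumes H: "H \<in> I" and e: "e \<in> bd H" "e \<in> Ch" and p: "(Rr H)\<^sup>*\<^sup>* (nb H e) K"
    and v: "v \<in> \<Union>(bd K)" "v \<in> \<Union>(bd H)"
  shows "v \<in> e"
proof -
  have KI: "K \<in> I - {H}" using Rr_in[OF p] nb_prop[OF H e] by auto
  obtain d where d: "d \<in> bd K" "d \<in> bd H" "v \<in> d" using share_edge[of K H v] KI H v by auto
  have dC: "d \<in> Ch" using in_Ch(1)[OF H _ _ d(2) d(1)] KI by auto
  have nbd: "nb H d = K" using nb_unique[of H d K] H KI d by auto
  show ?thesis
  proof (cases "d = e")
    case True then show ?thesis using d by simp
  next
    case False
    have "(Rr H)\<^sup>*\<^sup>* (nb H d) (nb H e)" using rtranclp_sym_rel[of "Rr H", OF Rr_sym p] nbd by simp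
    then show ?thesis using tree_sep[OF H d(2) dC e False] by simp
  qed
qed

lemma branch_disj:
  assumes H: "H \<in> I" and d: "d \<in> bd H" "d \<in> Ch" and e: "e \<in> bd H" "e \<in> Ch" and de: "d \<noteq> e"
    and p: "(Rr H)\<^sup>*\<^sup>* (nb H d) K" and q: "(Rr H)\<^sup>*\<^sup>* (nb H e) K'"
    and v: "v \<in> \<Union>(bd K)" "v \<in> \<Union>(bd K')"
  shows False
proof -
  have KI: "K \<in> I - {H}" using Rr_in[OF p] nb_prop[OF H d] by auto
  have KI': "K' \<in> I - {H}" using Rr_in[OF q] nb_prop[OF H e] by auto
  have q': "(Rr H)\<^sup>*\<^sup>* K' (nb H e)" using rtranclp_sym_rel[of "Rr H", OF Rr_sym q] .
  have "(Rr H)\<^sup>*\<^sup>* K K'"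
  proof (cases "K = K'")
    case True then show ?thesis by simp
  next
    case False
    obtain g where "g \<in> bd K" "g \<in> bd K'" "v \<in> g" using share_edge[of K K' v] KI KI' v by auto
    then have "Rr H K K'" unfolding Rr_def face_adj_def using KI KI' False by auto
    then show ?thesis by simp
  qed
  then have "(Rr H)\<^sup>*\<^sup>* (nb H d) (nb H e)" using p q' by (meson rtranclp_trans)
  then show False using tree_sep[OF H d e de] by simp
qed

definition rho :: "'f \<Rightarrow> 'a set \<Rightarrow> 'a set" where
  "rho H g = (if g \<in> bd H then g else
     (SOME e. e \<in> bd H \<and> e \<in> Ch \<and> (\<exists>K. (Rr H)\<^sup>*\<^sup>* (nb H e) K \<and> g \<in> bd K)))"

lemma rho_out:
  assumes "H \<in> I" "g \<in> E" "g \<notin> bd H"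
  shows "rho H g \<in> bd H \<and> rho H g \<in> Ch \<and> (\<exists>K. (Rr H)\<^sup>*\<^sup>* (nb H (rho H g)) K \<and> g \<in> bd K)"
  unfolding rho_def using someI_ex[OF branch_exists[OF assms]] assms(3) by simp

lemma rho_in: "H \<in> I \<Longrightarrow> g \<in> E \<Longrightarrow> rho H g \<in> bd H"
  using rho_out[of H g] unfolding rho_def by (cases "g \<in> bd H") auto

lemma rho_adj:
  assumes H: "H \<in> I" and adj: "line_adj E g g'"
  shows "rho H g = rho H g' \<or> line_adj E (rho H g) (rho H g')"
proof -
  have gE: "g \<in> E" "g' \<in> E" and ne: "g \<noteq> g'" and "g \<inter> g' \<noteq> {}" using adj unfolding line_adj_def by auto
  then obtain v where v: "v \<in> g" "v \<in> g'" by auto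
  have HE: "bd H \<subseteq> E" using bdE H by auto
  have mk: "line_adj E x y" if "x \<in> bd H" "y \<in> bd H" "x \<noteq> y" "v \<in> x" "v \<in> y" for x y
    using that HE unfolding line_adj_def by auto
  have one: "rho H x = rho H y \<or> line_adj E (rho H x) (rho H y)"
    if x: "x \<in> bd H" and y: "y \<in> E" "y \<notin> bd H" and vx: "v \<in> x" and vy: "v \<in> y" for x y
  proof -
    obtain K where K: "(Rr H)\<^sup>*\<^sup>* (nb H (rho H y)) K" "y \<in> bd K" and r: "rho H y \<in> bd H" "rho H y \<in> Ch"
      using rho_out[OF H y] by blast
    have "v \<in> rho H y" by (rule branch_meet[OF H r K(1)]) (use K(2) vy x vx in auto)
    moreover have "rho H x = x" using x unfolding rho_def by simp
    ultimately show ?thesis using mk[OF x r(1)] vx by (cases "x = rho H y") auto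
  qed
  show ?thesis
  proof (cases "g \<in> bd H")
    case g: True
    show ?thesis
    proof (cases "g' \<in> bd H")
      case True
      then have "rho H g = g" "rho H g' = g'" using g unfolding rho_def by auto
      then show ?thesis using adj by simp
    next
      case False then show ?thesis using one[OF g gE(2) False v] by simp
    qed
  next
    case g: False
    show ?thesis
    proof (cases "g' \<in> bd H")
      case True
      have "line_adj E x y \<Longrightarrow> line_adj E y x" for x y unfolding line_adj_def by auto
      then show ?thesis using one[OF True gE(1) g v(2) v(1)] by metis
    next
      case g': False
      obtain K where K: "(Rr H)\<^sup>*\<^sup>* (nb H (rho H g)) K" "g \<in> bd K" and r: "rho H g \<in> bd H" "rho H g \<in> Ch"
        using rho_out[OF H gE(1) g] by blast
      obtain K' where K': "(Rr H)\<^sup>*\<^sup>* (nb H (rho H g')) K'" "g' \<in> bd K'" and r': "rho H g' \<in> bd H" "rho H g' \<in> Ch"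
        using rho_out[OF H gE(2) g'] by blast
      show ?thesis
      proof (cases "rho H g = rho H g'")
        case True then show ?thesis by simp
      next
        case False
        have "v \<in> \<Union>(bd K)" "v \<in> \<Union>(bd K')" using K K' v by auto
        then have False by (rule branch_disj[OF H r r' False K(1) K'(1)])
        then show ?thesis by simp
      qed
    qed
  qed
qed

end

context rcers begin

lemma parity:
  assumes H: "H \<in> I" and kap: "\<forall>g\<in>bd H. \<forall>g'\<in>bd H. g \<noteq> g' \<longrightarrow> g \<inter> g' \<noteq> {} \<longrightarrow> \<kappa> g \<noteq> (\<kappa> g' :: bool)"
    and d: "d \<in> bd H" and e: "e \<in> bd H" and ev: "even (line_dist E d e)"
  shows "\<kappa> d = \<kappa> e"
proof -
  define LH where "LH = (\<lambda>x y. line_adj E x y \<and> x \<in> bd H \<and> y \<in> bd H)"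
  have HF: "H \<in> Fs" using H by simp
  have HE: "bd H \<subseteq> E" using bdE[OF HF] .
  have conn: "LH\<^sup>*\<^sup>* d e"
  proof -
    define D where "D = {g \<in> bd H. LH\<^sup>*\<^sup>* d g}"
    have cy: "\<forall>D. D \<subseteq> bd H \<and> D \<noteq> {} \<and> D \<noteq> bd H \<longrightarrow> (\<exists>x\<in>D. \<exists>y\<in>bd H - D. x \<inter> y \<noteq> {})"
      using cyc[OF HF] unfolding is_cycle_def by (elim conjE)
    have "D = bd H"
    proof (rule ccontr)
      assume "D \<noteq> bd H"
      moreover have "D \<subseteq> bd H" "D \<noteq> {}" using d unfolding D_def by auto
      ultimately have "\<exists>x\<in>D. \<exists>y\<in>bd H - D. x \<inter> y \<noteq> {}" using cy[rule_format, of D] by simp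
      then obtain x y where xy: "x \<in> D" "y \<in> bd H - D" "x \<inter> y \<noteq> {}" by blast
      have "x \<noteq> y" using xy by auto
      then have "LH x y" using xy HE unfolding LH_def line_adj_def D_def by auto
      moreover have "LH\<^sup>*\<^sup>* d x" using xy(1) unfolding D_def by simp
      ultimately have "LH\<^sup>*\<^sup>* d y" by (simp add: rtranclp.rtrancl_into_rtrancl)
      then show False using xy unfolding D_def by auto
    qed
    then show ?thesis using e unfolding D_def by auto
  qed
  have walkpar: "(line_adj E ^^ m) x y \<and> (\<kappa> y = \<kappa> x \<longleftrightarrow> even m)" if "(LH ^^ m) x y" for m x y
    using that
  proof (induction m arbitrary: y)
    case 0 then show ?case by simp
  next
    case (Suc m)
    from Suc.prems obtain z where z: "(LH ^^ m) x z" "LH z y" by (rule relpowp_Suc_E)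
    have IH: "(line_adj E ^^ m) x z" "\<kappa> z = \<kappa> x \<longleftrightarrow> even m" using Suc.IH[OF z(1)] by auto
    have zy: "line_adj E z y" "z \<in> bd H" "y \<in> bd H" using z(2) unfolding LH_def by auto
    have "\<kappa> z \<noteq> \<kappa> y" using kap zy unfolding line_adj_def by auto
    moreover have "(line_adj E ^^ Suc m) x y" using IH(1) zy(1) by (rule relpowp_Suc_I)
    ultimately show ?case using IH(2) by auto
  qed
  have retr: "\<exists>m\<le>k. (LH ^^ m) d (rho H g)" if "(line_adj E ^^ k) d g" for k g
    using that
  proof (induction k arbitrary: g)
    case 0
    then have "g = d" by simp
    then have "rho H g = d" using d unfolding rho_def by simp
    then show ?case by auto
  next
    case (Suc k)
    from Suc.prems obtain z where z: "(line_adj E ^^ k) d z" "line_adj E z g" by (rule relpowp_Suc_E)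
    obtain m where m: "m \<le> k" "(LH ^^ m) d (rho H z)" using Suc.IH[OF z(1)] by blast
    have zE: "z \<in> E" "g \<in> E" using z(2) unfolding line_adj_def by auto
    from rho_adj[OF H z(2)] show ?case
    proof
      assume "rho H z = rho H g"
      then show ?case using m by (metis le_SucI)
    next
      assume "line_adj E (rho H z) (rho H g)"
      then have "LH (rho H z) (rho H g)" unfolding LH_def using rho_in[OF H zE(1)] rho_in[OF H zE(2)] by simp
      then have "(LH ^^ Suc m) d (rho H g)" using m(2) by (metis relpowp_Suc_I)
      then show ?case using m(1) by (metis Suc_le_mono)
    qed
  qed
  obtain m0 where "(LH ^^ m0) d e" using conn rtranclp_power by metis
  then have w0: "(line_adj E ^^ m0) d e" using walkpar by blast
  define n where "n = line_dist E d e"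
  have wn: "(line_adj E ^^ n) d e" unfolding n_def line_dist_def using w0 by (rule LeastI)
  obtain m where m: "m \<le> n" "(LH ^^ m) d (rho H e)" using retr[OF wn] by blast
  have "rho H e = e" using e unfolding rho_def by simp
  then have m2: "(LH ^^ m) d e" using m(2) by simp
  have "n \<le> m" unfolding n_def line_dist_def using walkpar[OF m2] by (blast intro: Least_le)
  then have "m = n" using m(1) by simp
  then show ?thesis using walkpar[OF m2] ev unfolding n_def by auto
qed

lemma lam_exists:
  assumes H: "H \<in> I"
  shows "\<exists>lam. (\<forall>g\<in>bd H. \<forall>g'\<in>bd H. g \<noteq> g' \<longrightarrow> g \<inter> g' \<noteq> {} \<longrightarrow> lam g \<noteq> (lam g' :: bool))
             \<and> (\<forall>e\<in>bd H. e \<in> Ch \<longrightarrow> \<not> lam e)"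
proof -
  have HF: "H \<in> Fs" using H by simp
  obtain c :: "'a \<Rightarrow> bool" where c: "\<forall>e\<in>E. \<forall>u\<in>e. \<forall>v\<in>e. u \<noteq> v \<longrightarrow> c u \<noteq> c v" using bip_ex by blast
  have "\<exists>\<kappa>. \<forall>g\<in>bd H. \<forall>g'\<in>bd H. g \<noteq> g' \<longrightarrow> g \<inter> g' \<noteq> {} \<longrightarrow> \<kappa> g \<noteq> (\<kappa> g' :: bool)"
  proof (rule two_reg_color)
    show "finite (bd H)" using finbd[OF HF] .
    show "\<forall>e\<in>bd H. card e = 2" using bdE[OF HF] Ecard by auto
    show "\<forall>u\<in>\<Union>(bd H). card {e\<in>bd H. u\<in>e} = 2" using cycdeg[OF HF] by auto
    show "\<forall>e\<in>bd H. \<forall>u\<in>e. \<forall>v\<in>e. u \<noteq> v \<longrightarrow> c u \<noteq> c v" using c bdE[OF HF] by auto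
  qed
  then obtain \<kappa> where kap: "\<forall>g\<in>bd H. \<forall>g'\<in>bd H. g \<noteq> g' \<longrightarrow> g \<inter> g' \<noteq> {} \<longrightarrow> \<kappa> g \<noteq> (\<kappa> g' :: bool)"
    by blast
  have same: "\<kappa> d = \<kappa> e" if d: "d \<in> bd H" "d \<in> Ch" and e: "e \<in> bd H" "e \<in> Ch" for d e
  proof (cases "d = e")
    case True then show ?thesis by simp
  next
    case de: False
    have nd: "nb H d \<in> I" "nb H d \<noteq> H" "d \<in> bd (nb H d)" using nb_prop[OF H d] by auto
    have ne: "nb H e \<in> I" "nb H e \<noteq> H" "e \<in> bd (nb H e)" using nb_prop[OF H e] by auto
    have neq: "nb H d \<noteq> nb H e"
    proof
      assume eq: "nb H d = nb H e"
      have "d = e" by (rule unique_shared[OF H nd(1) nd(2)[symmetric] d(1) nd(3) e(1)]) (use ne(3) eq in simp)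
      then show False using de by simp
    qed
    have "card I > 2"
    proof -
      have "{H, nb H d, nb H e} \<subseteq> I" using H nd ne by auto
      moreover have "card {H, nb H d, nb H e} = 3" using nd(2) ne(2) neq by auto
      moreover have "finite I" using finFs by simp
      ultimately have "3 \<le> card I" using card_mono by metis
      then show ?thesis by simp
    qed
    then have R: "\<forall>F\<in>I. \<forall>F'\<in>I. \<forall>F''\<in>I. \<forall>e f.
         F \<noteq> F' \<and> F' \<noteq> F'' \<and> F \<noteq> F'' \<and> e \<in> bd F \<and> e \<in> bd F' \<and> f \<in> bd F' \<and> f \<in> bd F''
         \<longrightarrow> even (line_dist E e f)" using regul by auto
    have "even (line_dist E d e)"
      using R[rule_format, of "nb H d" H "nb H e" d e] H nd ne neq d e by auto
    then show ?thesis by (rule parity[OF H kap d(1) e(1)])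
  qed
  show ?thesis
  proof (cases "\<exists>e0. e0 \<in> bd H \<and> e0 \<in> Ch")
    case True
    then obtain e0 where e0: "e0 \<in> bd H" "e0 \<in> Ch" by blast
    show ?thesis
      by (rule exI[of _ "\<lambda>g. \<kappa> g \<noteq> \<kappa> e0"]) (use kap same[OF _ _ e0] in auto)
  next
    case False
    then show ?thesis using kap by blast
  qed
qed

end

lemma card_sel2:
  assumes "a \<noteq> b" "(a \<in> M) \<noteq> (b \<in> M)"
  shows "card {e\<in>{a,b}. e \<in> M} = 1"
proof (cases "a \<in> M")
  case True
  then have "{e\<in>{a,b}. e \<in> M} = {a}" using assms by auto
  then show ?thesis by simp
next
  case False
  then have "{e\<in>{a,b}. e \<in> M} = {b}" using assms by auto
  then show ?thesis by simp
qed

lemma card_sel3: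
  assumes "a \<noteq> b" "a \<noteq> c" "b \<noteq> c"
    and "(a \<in> M \<and> b \<notin> M \<and> c \<notin> M) \<or> (a \<notin> M \<and> b \<in> M \<and> c \<notin> M) \<or> (a \<notin> M \<and> b \<notin> M \<and> c \<in> M)"
  shows "card {e\<in>{a,b,c}. e \<in> M} = 1"
proof -
  from assms(4) have "{e\<in>{a,b,c}. e \<in> M} = {a} \<or> {e\<in>{a,b,c}. e \<in> M} = {b} \<or> {e\<in>{a,b,c}. e \<in> M} = {c}"
    using assms(1-3) by auto
  then show ?thesis by auto
qed

context rcers begin

definition lam :: "'f \<Rightarrow> 'a set \<Rightarrow> bool" where
  "lam H = (SOME l. (\<forall>g\<in>bd H. \<forall>g'\<in>bd H. g \<noteq> g' \<longrightarrow> g \<inter> g' \<noteq> {} \<longrightarrow> l g \<noteq> (l g' :: bool))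
             \<and> (\<forall>e\<in>bd H. e \<in> Ch \<longrightarrow> \<not> l e))"

lemma lam_prop:
  assumes "H \<in> I"
  shows "\<And>g g'. g \<in> bd H \<Longrightarrow> g' \<in> bd H \<Longrightarrow> g \<noteq> g' \<Longrightarrow> v \<in> g \<Longrightarrow> v \<in> g' \<Longrightarrow> lam H g \<noteq> lam H g'"
    and "\<And>e. e \<in> bd H \<Longrightarrow> e \<in> Ch \<Longrightarrow> \<not> lam H e"
proof -
  define Q where "Q = (\<lambda>l. (\<forall>g\<in>bd H. \<forall>g'\<in>bd H. g \<noteq> g' \<longrightarrow> g \<inter> g' \<noteq> {} \<longrightarrow> l g \<noteq> (l g' :: bool))
             \<and> (\<forall>e\<in>bd H. e \<in> Ch \<longrightarrow> \<not> l e))"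
  have ex: "\<exists>l. Q l" unfolding Q_def by (rule lam_exists[OF assms])
  have lq: "lam H = (SOME l. Q l)" unfolding lam_def Q_def by (rule refl)
  have "Q (SOME l. Q l)" by (rule someI_ex[OF ex])
  then have "Q (lam H)" using lq by simp
  then have "(\<forall>g\<in>bd H. \<forall>g'\<in>bd H. g \<noteq> g' \<longrightarrow> g \<inter> g' \<noteq> {} \<longrightarrow> lam H g \<noteq> lam H g')
             \<and> (\<forall>e\<in>bd H. e \<in> Ch \<longrightarrow> \<not> lam H e)" unfolding Q_def by simp
  then have P1: "\<forall>g\<in>bd H. \<forall>g'\<in>bd H. g \<noteq> g' \<longrightarrow> g \<inter> g' \<noteq> {} \<longrightarrow> lam H g \<noteq> lam H g'"
    and P2: "\<forall>e\<in>bd H. e \<in> Ch \<longrightarrow> \<not> lam H e" by auto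
  show "lam H g \<noteq> lam H g'" if "g \<in> bd H" "g' \<in> bd H" "g \<noteq> g'" "v \<in> g" "v \<in> g'" for g g'
  proof -
    have "g \<inter> g' \<noteq> {}" using that(4,5) by auto
    then show ?thesis using P1 that(1-3) by simp
  qed
  show "\<not> lam H e" if "e \<in> bd H" "e \<in> Ch" for e using P2 that by simp
qed

lemma out_edge_face:
  assumes "e \<in> bd out"
  obtains G where "G \<in> I" "e \<in> bd G" "\<And>H. H \<in> I \<Longrightarrow> e \<in> bd H \<Longrightarrow> H = G"
proof -
  have eE: "e \<in> E" using assms bdE[OF outFs] by auto
  obtain F1 F2 where F: "F1 \<noteq> F2" "F1 \<in> Fs" "F2 \<in> Fs" "e \<in> bd F1" "e \<in> bd F2"
    "\<And>F. F \<in> Fs \<Longrightarrow> e \<in> bd F \<Longrightarrow> F = F1 \<or> F = F2" by (rule faces_edge[OF eE]) blast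
  have "out = F1 \<or> out = F2" using F(6)[OF outFs assms] .
  then show ?thesis
  proof
    assume o: "out = F1"
    have "F2 \<in> I" using F o by auto
    moreover have "H = F2" if "H \<in> I" "e \<in> bd H" for H using F(6)[of H] that o by auto
    ultimately show ?thesis using that[of F2] F(5) by blast
  next
    assume o: "out = F2"
    have "F1 \<in> I" using F o by auto
    moreover have "H = F1" if "H \<in> I" "e \<in> bd H" for H using F(6)[of H] that o by auto
    ultimately show ?thesis using that[of F1] F(4) by blast
  qed
qed

lemma matching:
  assumes TI: "T \<subseteq> I"
    and Tdis: "\<forall>F\<in>T. \<forall>F'\<in>T. F \<noteq> F' \<longrightarrow> \<Union>(bd F) \<inter> \<Union>(bd F') = {}"
  shows "\<exists>M. perfect_matching V E M \<and> (\<forall>F\<in>T. M_alternating bd M F)"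
proof -
  define M where "M = {e\<in>E. (e \<in> bd out \<and> (\<exists>H\<in>I. e \<in> bd H \<and> (H \<in> T \<longleftrightarrow> lam H e)))
                       \<or> (e \<notin> bd out \<and> (\<forall>H\<in>I. e \<in> bd H \<longrightarrow> H \<notin> T))}"
  have outE: "bd out \<subseteq> E" using bdE[OF outFs] .
  have m1: "e \<in> M \<longleftrightarrow> (G \<in> T \<longleftrightarrow> lam G e)" if h: "e \<in> bd out" "G \<in> I" "e \<in> bd G" for e G
  proof -
    obtain G' where G': "G' \<in> I" "e \<in> bd G'" "\<And>H. H \<in> I \<Longrightarrow> e \<in> bd H \<Longrightarrow> H = G'"
      by (rule out_edge_face[OF h(1)]) blast
    have GG: "G = G'" using G'(3)[OF h(2,3)] .
    have "(\<exists>H\<in>I. e \<in> bd H \<and> (H \<in> T \<longleftrightarrow> lam H e)) \<longleftrightarrow> (G \<in> T \<longleftrightarrow> lam G e)"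
    proof
      assume "\<exists>H\<in>I. e \<in> bd H \<and> (H \<in> T \<longleftrightarrow> lam H e)"
      then obtain H where H: "H \<in> I" "e \<in> bd H" "H \<in> T \<longleftrightarrow> lam H e" by blast
      have "H = G'" using G'(3)[OF H(1,2)] .
      then show "G \<in> T \<longleftrightarrow> lam G e" using H GG by simp
    next
      assume "G \<in> T \<longleftrightarrow> lam G e"
      then show "\<exists>H\<in>I. e \<in> bd H \<and> (H \<in> T \<longleftrightarrow> lam H e)" using h(2,3) by blast
    qed
    then show ?thesis unfolding M_def using h outE by auto
  qed
  have m2: "e \<in> M \<longleftrightarrow> (H \<notin> T \<and> K \<notin> T)"
    if "e \<in> Ch" "H \<in> I" "K \<in> I" "H \<noteq> K" "e \<in> bd H" "e \<in> bd K" for e H K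
  proof -
    have eq: "{F\<in>Fs. e \<in> bd F} = {H,K}" using in_Ch(2)[OF that(2-6)] .
    have o: "H' = H \<or> H' = K" if "H' \<in> I" "e \<in> bd H'" for H'
    proof -
      have "H' \<in> {F\<in>Fs. e \<in> bd F}" using that by simp
      then show ?thesis unfolding eq by simp
    qed
    have "e \<in> E" "e \<notin> bd out" using that(1) unfolding Ch_def by auto
    then show ?thesis unfolding M_def using o that by auto
  qed
  have MT: "\<not> (H \<in> T \<and> K \<in> T)" if "H \<noteq> K" "e \<in> bd H" "e \<in> bd K" "H \<in> I" "K \<in> I" for H K e
  proof
    assume "H \<in> T \<and> K \<in> T"
    moreover have "e \<noteq> {}" using that bdE Ecard by (metis DiffD1 card.empty subsetD zero_neq_numeral)
    ultimately show False using Tdis that by blast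
  qed
  have alt: "e \<in> M \<longleftrightarrow> lam H e" if H: "H \<in> T" and e: "e \<in> bd H" for H e
  proof (cases "e \<in> bd out")
    case True
    then show ?thesis using m1[OF True _ e] H TI by auto
  next
    case False
    have HI: "H \<in> I" using H TI by auto
    have eE: "e \<in> E" using e bdE HI by auto
    have eC: "e \<in> Ch" using eE False unfolding Ch_def by simp
    obtain A B where AB: "A \<in> I" "B \<in> I" "A \<noteq> B" "e \<in> bd A" "e \<in> bd B" by (rule phi_Ch[OF eC]) blast
    have "H \<in> {F\<in>Fs. e \<in> bd F}" using HI e by simp
    then have "H = A \<or> H = B" unfolding in_Ch(2)[OF AB] by simp
    then have "e \<notin> M" using m2[OF eC AB] H by auto
    moreover have "\<not> lam H e" using lam_prop(2)[OF HI e eC] .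
    ultimately show ?thesis by simp
  qed
  have pm: "card {e\<in>M. v\<in>e} = 1" if v: "v \<in> V" for v
  proof -
    have vo: "v \<in> \<Union>(bd out)" using all_on_out[OF v] .
    have cO: "card {e\<in>bd out. v\<in>e} = 2" using cycdeg[OF outFs vo] .
    obtain a where a: "a \<in> bd out" "v \<in> a" using vo by auto
    obtain b where b: "b \<in> bd out" "v \<in> b" "b \<noteq> a" using card2_other[OF cO, of a] a by auto
    have O: "{e\<in>bd out. v\<in>e} = {a,b}" using card2_eq[OF cO, of a b] a b by auto
    define X where "X = {e\<in>E. v\<in>e}"
    have MX: "{e\<in>M. v\<in>e} = {e\<in>X. e \<in> M}" unfolding X_def M_def by auto
    have aX: "a \<in> X" "b \<in> X" using a b outE unfolding X_def by auto
    obtain G where G: "G \<in> I" "a \<in> bd G" "\<And>H. H \<in> I \<Longrightarrow> a \<in> bd H \<Longrightarrow> H = G"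
      by (rule out_edge_face[OF a(1)]) blast
    have "card X = 2 \<or> card X = 3" using degout[OF v vo] unfolding X_def .
    then show ?thesis
    proof
      assume cX: "card X = 2"
      have X2: "X = {a,b}" using card2_eq[OF cX aX b(3)[symmetric]] .
      have vG: "v \<in> \<Union>(bd G)" using G(1,2) a by auto
      have cG: "card {e\<in>bd G. v\<in>e} = 2" using cycdeg[OF _ vG] G(1,2) by auto
      obtain b' where b': "b' \<in> bd G" "v \<in> b'" "b' \<noteq> a" using card2_other[OF cG, of a] G(1,2) a by auto
      have "b' \<in> X" using b' bdE G(1,2) unfolding X_def by auto
      then have bb: "b' = b" using b'(3) unfolding X2 by simp
      have "lam G a \<noteq> lam G b" using lam_prop(1)[OF G(1) G(2) b'(1) b'(3)[symmetric] a(2) b'(2)] bb by simp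
      moreover have "a \<in> M \<longleftrightarrow> (G \<in> T \<longleftrightarrow> lam G a)" using m1[OF a(1) G(1,2)] .
      moreover have "b \<in> M \<longleftrightarrow> (G \<in> T \<longleftrightarrow> lam G b)" using m1[OF b(1) G(1)] b' bb by simp
      ultimately have "(a \<in> M) \<noteq> (b \<in> M)" by blast
      then show ?thesis unfolding MX X2 using card_sel2[of a b M] b(3) by simp
    next
      assume cX: "card X = 3"
      have "finite X" unfolding X_def using finEv .
      then have "card (X - {a,b}) = card X - card {a,b}" using aX by (simp add: card_Diff_subset)
      then have "card (X - {a,b}) = 1" using cX b(3) by simp
      then obtain c where c: "c \<in> X" "c \<notin> {a,b}" by (metis card.empty Diff_iff ex_in_conv zero_neq_one)
      have cE: "c \<in> E" "v \<in> c" using c unfolding X_def by auto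
      have cno: "c \<notin> bd out"
      proof
        assume "c \<in> bd out"
        then have "c \<in> {e\<in>bd out. v\<in>e}" using cE by simp
        then show False using O c by simp
      qed
      have cC: "c \<in> Ch" unfolding Ch_def using cE cno by simp
      obtain H2 H3 where H: "H2 \<in> I" "H3 \<in> I" "H2 \<noteq> H3" "c \<in> bd H2" "c \<in> bd H3" by (rule phi_Ch[OF cC]) blast
      have X3: "X = {a,b,c}" using card3_eq[OF cX aX c(1)] b(3) c(2) by auto
      have other: "\<exists>x. x \<in> bd K \<and> v \<in> x \<and> x \<noteq> c \<and> (x = a \<or> x = b)" if K: "K \<in> I" "c \<in> bd K" for K
      proof -
        have vK: "v \<in> \<Union>(bd K)" using K cE by auto
        have cK: "card {e\<in>bd K. v\<in>e} = 2" using cycdeg[OF _ vK] K by auto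
        obtain x where x: "x \<in> bd K" "v \<in> x" "x \<noteq> c" using card2_other[OF cK, of c] K cE by auto
        have "x \<in> X" using x bdE K unfolding X_def by auto
        then show ?thesis using x X3 by auto
      qed
      obtain x2 where x2: "x2 \<in> bd H2" "v \<in> x2" "x2 \<noteq> c" "x2 = a \<or> x2 = b" using other[OF H(1,4)] by blast
      obtain x3 where x3: "x3 \<in> bd H3" "v \<in> x3" "x3 \<noteq> c" "x3 = a \<or> x3 = b" using other[OF H(2,5)] by blast
      have x2o: "x2 \<in> bd out" "x3 \<in> bd out" using x2(4) x3(4) a b by auto
      have x23: "x2 \<noteq> x3"
      proof
        assume eq: "x2 = x3"
        have "x2 \<in> E" using x2o outE by auto
        moreover have "out \<noteq> H2" "out \<noteq> H3" using H by auto
        ultimately show False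
          using three_faces[of x2 out H2 H3] outFs H x2o x2(1) x3(1) eq by auto
      qed
      have l2: "lam H2 x2" using lam_prop(1)[OF H(1) x2(1) H(4) x2(3) x2(2) cE(2)] lam_prop(2)[OF H(1) H(4) cC] by auto
      have l3: "lam H3 x3" using lam_prop(1)[OF H(2) x3(1) H(5) x3(3) x3(2) cE(2)] lam_prop(2)[OF H(2) H(5) cC] by auto
      have M2: "x2 \<in> M \<longleftrightarrow> H2 \<in> T" using m1[OF x2o(1) H(1) x2(1)] l2 by simp
      have M3: "x3 \<in> M \<longleftrightarrow> H3 \<in> T" using m1[OF x2o(2) H(2) x3(1)] l3 by simp
      have Mc: "c \<in> M \<longleftrightarrow> (H2 \<notin> T \<and> H3 \<notin> T)" using m2[OF cC H] .
      have nb: "\<not> (H2 \<in> T \<and> H3 \<in> T)" using MT[OF H(3) H(4) H(5) H(1) H(2)] .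
      have X3': "X = {x2, x3, c}"
      proof -
        consider "x2 = a" "x3 = b" | "x2 = b" "x3 = a" using x2(4) x3(4) x23 by blast
        then show ?thesis unfolding X3 by cases (simp_all add: insert_commute)
      qed
      have "(x2 \<in> M \<and> x3 \<notin> M \<and> c \<notin> M) \<or> (x2 \<notin> M \<and> x3 \<in> M \<and> c \<notin> M) \<or> (x2 \<notin> M \<and> x3 \<notin> M \<and> c \<in> M)"
        using M2 M3 Mc nb by blast
      then show ?thesis unfolding MX X3' using card_sel3[OF x23 x2(3) x3(3)] by simp
    qed
  qed
  have "M \<subseteq> E" unfolding M_def by auto
  then have pmM: "perfect_matching V E M" unfolding perfect_matching_def degree_def using pm by simp
  have altT: "M_alternating bd M F" if F: "F \<in> T" for F
    unfolding M_alternating_def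
  proof
    fix v assume vF: "v \<in> \<Union>(bd F)"
    have FI: "F \<in> I" using F TI by auto
    have cF: "card {e\<in>bd F. v\<in>e} = 2" using cycdeg[OF _ vF] FI by auto
    obtain p where p: "p \<in> bd F" "v \<in> p" using vF by auto
    obtain q where q: "q \<in> bd F" "v \<in> q" "q \<noteq> p" using card2_other[OF cF, of p] p by auto
    have Y: "{e\<in>bd F. v\<in>e} = {p,q}" using card2_eq[OF cF, of p q] p q by auto
    have "lam F p \<noteq> lam F q" using lam_prop(1)[OF FI p(1) q(1) q(3)[symmetric] p(2) q(2)] .
    moreover have "p \<in> M \<longleftrightarrow> lam F p" "q \<in> M \<longleftrightarrow> lam F q" using alt[OF F p(1)] alt[OF F q(1)] by auto
    moreover have "{e \<in> bd F \<inter> M. v \<in> e} = {e\<in>{e\<in>bd F. v\<in>e}. e \<in> M}" by auto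
    ultimately show "card {e \<in> bd F \<inter> M. v \<in> e} = 1"
      unfolding Y using card_sel2[of p q M] q(3) by simp
  qed
  show ?thesis using pmM altT by blast
qed

end

theorem lemma4p5:
  fixes V :: "'a set" and E :: "'a set set" and Fs :: "'f set"
    and bd :: "'f \<Rightarrow> 'a set set" and out :: 'f and S :: "'f set" and F :: 'f
  assumes "regular_cers V E Fs bd out"
    and "maximal_resonant_set V E Fs bd out S"
    and "F \<in> inner_faces Fs out"
    and "F \<notin> S"
  shows "\<exists>F'\<in>S. face_adj bd F F'"
proof (rule ccontr)
  assume nc: "\<not> (\<exists>F'\<in>S. face_adj bd F F')"
  interpret rcers V E Fs bd out by (unfold_locales) (rule assms(1))
  have res: "resonant_set V E Fs bd out S"
    and maxi: "\<forall>S'. resonant_set V E Fs bd out S' \<and> S \<subseteq> S' \<longrightarrow> S' = S"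
    using assms(2) unfolding maximal_resonant_set_def by auto
  have SI: "S \<subseteq> I" and Sdis: "\<forall>F\<in>S. \<forall>F'\<in>S. F \<noteq> F' \<longrightarrow> \<Union>(bd F) \<inter> \<Union>(bd F') = {}"
    using res unfolding resonant_set_def inner_faces_def by auto
  have FI: "F \<in> I" using assms(3) unfolding inner_faces_def .
  define T where "T = insert F S"
  have TI: "T \<subseteq> I" unfolding T_def using SI FI by auto
  have Fdis: "\<Union>(bd F) \<inter> \<Union>(bd F') = {}" if F': "F' \<in> S" for F'
  proof (rule ccontr)
    assume "\<Union>(bd F) \<inter> \<Union>(bd F') \<noteq> {}"
    then obtain v where v: "v \<in> \<Union>(bd F)" "v \<in> \<Union>(bd F')" by blast
    have F'I: "F' \<in> I" using F' SI by auto
    obtain e where e: "e \<in> bd F" "e \<in> bd F'" "v \<in> e" using share_edge[of F F' v] FI F'I v by auto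
    have "F \<noteq> F'" using F' assms(4) by auto
    then have "face_adj bd F F'" unfolding face_adj_def using e by auto
    then show False using nc F' by blast
  qed
  have Tdis: "\<forall>F1\<in>T. \<forall>F2\<in>T. F1 \<noteq> F2 \<longrightarrow> \<Union>(bd F1) \<inter> \<Union>(bd F2) = {}"
  proof (intro ballI impI)
    fix F1 F2 assume F12: "F1 \<in> T" "F2 \<in> T" "F1 \<noteq> F2"
    show "\<Union>(bd F1) \<inter> \<Union>(bd F2) = {}"
    proof (cases "F1 = F")
      case True
      then have "F2 \<in> S" using F12 unfolding T_def by auto
      then show ?thesis using Fdis True by simp
    next
      case F1: False
      then have F1S: "F1 \<in> S" using F12 unfolding T_def by auto
      show ?thesis
      proof (cases "F2 = F")
        case True
        then show ?thesis using Fdis[OF F1S] by blast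
      next
        case False
        then have "F2 \<in> S" using F12 unfolding T_def by auto
        then show ?thesis using Sdis F1S F12(3) by blast
      qed
    qed
  qed
  obtain M where M: "perfect_matching V E M" "\<forall>F\<in>T. M_alternating bd M F"
    using matching[OF TI Tdis] by blast
  have "resonant_set V E Fs bd out T"
    unfolding resonant_set_def inner_faces_def using TI Tdis M by blast
  moreover have "S \<subseteq> T" unfolding T_def by auto
  ultimately have "T = S" using maxi by blast
  then show False using assms(4) unfolding T_def by auto
qed

end
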